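(* If $G$ is a triangle-free $K_4$-minor-free graph, then $G$ is $(2,2,1)$-AT extendable with respect to $(x,y,z)$ for all distinct vertices $x,y,z\in V(G)$.
   Context: All graphs are finite and simple. For an orientation $D$ of a graph $G$, an Eulerian sub-digraph of $D$ is a spanning sub-digraph $F$ of $D$ with $d^+_F(v)=d^-_F(v)$ for every vertex $v$. Let $\mathrm{diff}(D)$ be the number of Eulerian sub-digraphs of $D$ with an even number of arcs minus the number with an odd number of arcs; $D$ is an AT-orientation if $\mathrm{diff}(D)\neq 0$. For $f:V(G)\to\mathbb{N}$, $G$ is $f$-AT if $G$ has an AT-orientation $D$ with $d^+_D(v)\le f(v)-1$ for every vertex $v$. Given distinct vertices $v_1,\dots,v_k$ and integers $a_i\in\{1,2\}$, define $f(v_i)=a_i$ for $i\in[k]$ and $f(v)=3$ for all other vertices; $G$ is $(a_1,\dots,a_k)$-AT extendable with respect to $(v_1,\dots,v_k)$ if $G$ is $f$-AT. *)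

theory Defs
  imports Main
begin

definition simple_graph :: "'a set \<Rightarrow> 'a set set \<Rightarrow> bool" where
  "simple_graph V E \<longleftrightarrow> finite V \<and>
     (\<forall>e\<in>E. \<exists>u v. u \<noteq> v \<and> u \<in> V \<and> v \<in> V \<and> e = {u, v})"

definition triangle_free :: "'a set set \<Rightarrow> bool" where
  "triangle_free E \<longleftrightarrow> \<not> (\<exists>a b c. {a, b} \<in> E \<and> {b, c} \<in> E \<and> {a, c} \<in> E)"

definition connected_in :: "'a set set \<Rightarrow> 'a set \<Rightarrow> bool" where
  "connected_in E S \<longleftrightarrow>
     (\<forall>u\<in>S. \<forall>v\<in>S. (\<lambda>x y. x \<in> S \<and> y \<in> S \<and> {x, y} \<in> E)\<^sup>*\<^sup>* u v)"

text \<open>G contains K4 as a minor iff there are four pairwise disjoint nonempty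
  connected branch sets, pairwise joined by an edge.\<close>
definition has_K4_minor :: "'a set \<Rightarrow> 'a set set \<Rightarrow> bool" where
  "has_K4_minor V E \<longleftrightarrow> (\<exists>B :: nat \<Rightarrow> 'a set.
     (\<forall>i<4. B i \<noteq> {} \<and> B i \<subseteq> V \<and> connected_in E (B i)) \<and>
     (\<forall>i<4. \<forall>j<4. i \<noteq> j \<longrightarrow> B i \<inter> B j = {} \<and>
        (\<exists>u\<in>B i. \<exists>v\<in>B j. {u, v} \<in> E)))"

definition orientation :: "'a set set \<Rightarrow> ('a \<times> 'a) set \<Rightarrow> bool" where
  "orientation E D \<longleftrightarrow>
     (\<forall>(u, v)\<in>D. {u, v} \<in> E) \<and>
     (\<forall>u v. {u, v} \<in> E \<longrightarrow> ((u, v) \<in> D \<longleftrightarrow> (v, u) \<notin> D))"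

definition outdeg :: "('a \<times> 'a) set \<Rightarrow> 'a \<Rightarrow> nat" where
  "outdeg D v = card {w. (v, w) \<in> D}"

definition indeg :: "('a \<times> 'a) set \<Rightarrow> 'a \<Rightarrow> nat" where
  "indeg D v = card {w. (w, v) \<in> D}"

definition eulerian_subdigraphs :: "'a set \<Rightarrow> ('a \<times> 'a) set \<Rightarrow> ('a \<times> 'a) set set" where
  "eulerian_subdigraphs V D = {F. F \<subseteq> D \<and> (\<forall>v\<in>V. outdeg F v = indeg F v)}"

definition diff :: "'a set \<Rightarrow> ('a \<times> 'a) set \<Rightarrow> int" where
  "diff V D = int (card {F \<in> eulerian_subdigraphs V D. even (card F)})
            - int (card {F \<in> eulerian_subdigraphs V D. odd (card F)})"

definition AT_orientation :: "'a set \<Rightarrow> 'a set set \<Rightarrow> ('a \<times> 'a) set \<Rightarrow> bool" where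
  "AT_orientation V E D \<longleftrightarrow> orientation E D \<and> diff V D \<noteq> 0"

definition f_AT :: "'a set \<Rightarrow> 'a set set \<Rightarrow> ('a \<Rightarrow> nat) \<Rightarrow> bool" where
  "f_AT V E f \<longleftrightarrow> (\<exists>D. AT_orientation V E D \<and> (\<forall>v\<in>V. outdeg D v \<le> f v - 1))"

text \<open>(a_1,...,a_k)-AT extendable w.r.t. (v_1,...,v_k): f(v_i) = a_i, f = 3 elsewhere.\<close>
definition AT_extendable :: "'a set \<Rightarrow> 'a set set \<Rightarrow> nat list \<Rightarrow> 'a list \<Rightarrow> bool" where
  "AT_extendable V E as vs \<longleftrightarrow>
     f_AT V E (\<lambda>v. case map_of (zip vs as) v of None \<Rightarrow> 3 | Some a \<Rightarrow> a)"

end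

theory Submission
  imports Defs
begin


definition nbrs :: "'a set set \<Rightarrow> 'a \<Rightarrow> 'a set" where
  "nbrs E v = {u. {u, v} \<in> E}"

definition deg :: "'a set set \<Rightarrow> 'a \<Rightarrow> nat" where
  "deg E v = card (nbrs E v)"

lemma sg_edge:
  assumes "simple_graph V E" "{u, v} \<in> E"
  shows "u \<in> V \<and> v \<in> V \<and> u \<noteq> v"
proof -
  obtain a b where "a \<noteq> b" "a \<in> V" "b \<in> V" "{u, v} = {a, b}"
    using assms unfolding simple_graph_def by blast
  then show ?thesis by (auto simp: doubleton_eq_iff)
qed

lemma sg_finite: "simple_graph V E \<Longrightarrow> finite V"
  by (simp add: simple_graph_def)

lemma nbrs_sub: "simple_graph V E \<Longrightarrow> nbrs E v \<subseteq> V"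
  unfolding nbrs_def using sg_edge by fastforce

lemma nbrs_finite: "simple_graph V E \<Longrightarrow> finite (nbrs E v)"
  using nbrs_sub sg_finite finite_subset by metis

lemma nbrs_noloop: "simple_graph V E \<Longrightarrow> v \<notin> nbrs E v"
  unfolding nbrs_def using sg_edge by fastforce

definition adjs :: "'a set set \<Rightarrow> 'a set \<Rightarrow> 'a set \<Rightarrow> bool" where
  "adjs E X Y \<longleftrightarrow> (\<exists>u\<in>X. \<exists>v\<in>Y. {u, v} \<in> E)"

lemma adjs_sym: "adjs E X Y \<Longrightarrow> adjs E Y X"
  unfolding adjs_def by (metis insert_commute)

lemma K4I:
  assumes ne: "B0 \<noteq> {}" "B1 \<noteq> {}" "B2 \<noteq> {}" "B3 \<noteq> {}"
    and sub: "B0 \<subseteq> V" "B1 \<subseteq> V" "B2 \<subseteq> V" "B3 \<subseteq> V"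
    and con: "connected_in E B0" "connected_in E B1" "connected_in E B2" "connected_in E B3"
    and dis: "B0 \<inter> B1 = {}" "B0 \<inter> B2 = {}" "B0 \<inter> B3 = {}" "B1 \<inter> B2 = {}"
             "B1 \<inter> B3 = {}" "B2 \<inter> B3 = {}"
    and ad: "adjs E B0 B1" "adjs E B0 B2" "adjs E B0 B3" "adjs E B1 B2"
             "adjs E B1 B3" "adjs E B2 B3"
  shows "has_K4_minor V E"
proof -
  define B where "B = (\<lambda>k::nat. [B0, B1, B2, B3] ! k)"
  have k4: "\<And>k::nat. k < 4 \<Longrightarrow> k = 0 \<or> k = 1 \<or> k = 2 \<or> k = 3" by arith
  have P1: "\<forall>i<4. B i \<noteq> {} \<and> B i \<subseteq> V \<and> connected_in E (B i)"
  proof (intro allI impI)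
    fix i :: nat assume "i < 4"
    then show "B i \<noteq> {} \<and> B i \<subseteq> V \<and> connected_in E (B i)"
      using k4[of i] ne sub con by (auto simp: B_def)
  qed
  have P2: "\<forall>i<4. \<forall>j<4. i \<noteq> j \<longrightarrow> B i \<inter> B j = {} \<and> (\<exists>u\<in>B i. \<exists>v\<in>B j. {u, v} \<in> E)"
  proof (intro allI impI)
    fix i j :: nat assume "i < 4" "j < 4" "i \<noteq> j"
    have adsym: "adjs E B1 B0" "adjs E B2 B0" "adjs E B3 B0" "adjs E B2 B1" "adjs E B3 B1" "adjs E B3 B2"
      using ad adjs_sym by metis+
    have "B i \<inter> B j = {} \<and> adjs E (B i) (B j)"
      using k4[OF \<open>i<4\<close>] k4[OF \<open>j<4\<close>] \<open>i \<noteq> j\<close> dis ad adsym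
      by (auto simp: B_def Int_commute)
    then show "B i \<inter> B j = {} \<and> (\<exists>u\<in>B i. \<exists>v\<in>B j. {u, v} \<in> E)"
      by (simp add: adjs_def)
  qed
  show ?thesis unfolding has_K4_minor_def using P1 P2 by blast
qed

lemma seg_conn:
  assumes sc: "successively (\<lambda>u v. {u, v} \<in> E) xs" and "l \<le> r" "r < length xs"
  shows "connected_in E ((!) xs ` {l..r})"
proof -
  define S where "S = (!) xs ` {l..r}"
  define Rl where "Rl = (\<lambda>x y. x \<in> S \<and> y \<in> S \<and> {x, y} \<in> E)"
  have step: "\<And>t. l \<le> t \<Longrightarrow> Suc t \<le> r \<Longrightarrow> Rl (xs!t) (xs!Suc t) \<and> Rl (xs!Suc t) (xs!t)"
  proof -
    fix t assume "l \<le> t" "Suc t \<le> r"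
    then have e: "{xs!t, xs!Suc t} \<in> E" using successively_nth[OF sc] \<open>r < length xs\<close> by simp
    have "xs!t \<in> S" "xs!Suc t \<in> S" using \<open>l \<le> t\<close> \<open>Suc t \<le> r\<close> by (auto simp: S_def)
    then show "Rl (xs!t) (xs!Suc t) \<and> Rl (xs!Suc t) (xs!t)" using e by (auto simp: Rl_def insert_commute)
  qed
  have main: "\<And>k t. l \<le> t \<Longrightarrow> t + k \<le> r \<Longrightarrow> Rl\<^sup>*\<^sup>* (xs!t) (xs!(t+k)) \<and> Rl\<^sup>*\<^sup>* (xs!(t+k)) (xs!t)"
  proof -
    fix k t assume "l \<le> t" "t + k \<le> r"
    then show "Rl\<^sup>*\<^sup>* (xs!t) (xs!(t+k)) \<and> Rl\<^sup>*\<^sup>* (xs!(t+k)) (xs!t)"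
    proof (induction k)
      case 0 then show ?case by simp
    next
      case (Suc k)
      then have ih: "Rl\<^sup>*\<^sup>* (xs!t) (xs!(t+k)) \<and> Rl\<^sup>*\<^sup>* (xs!(t+k)) (xs!t)" by simp
      have st: "Rl (xs!(t+k)) (xs!Suc (t+k)) \<and> Rl (xs!Suc (t+k)) (xs!(t+k))"
        using step[of "t+k"] Suc.prems by simp
      show ?case using ih st
        by (metis add_Suc_right converse_rtranclp_into_rtranclp rtranclp.rtrancl_into_rtrancl)
    qed
  qed
  show ?thesis unfolding connected_in_def
  proof (intro ballI)
    fix u v assume "u \<in> (!) xs ` {l..r}" "v \<in> (!) xs ` {l..r}"
    then obtain t t' where tt: "u = xs!t" "v = xs!t'" "t \<in> {l..r}" "t' \<in> {l..r}" by auto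
    have "Rl\<^sup>*\<^sup>* u v"
    proof (cases "t \<le> t'")
      case True then show ?thesis using main[of t "t' - t"] tt by auto
    next
      case False then show ?thesis using main[of t' "t - t'"] tt by auto
    qed
    then show "(\<lambda>x y. x \<in> (!) xs ` {l..r} \<and> y \<in> (!) xs ` {l..r} \<and> {x, y} \<in> E)\<^sup>*\<^sup>* u v"
      by (simp add: Rl_def S_def)
  qed
qed

lemma successively_take: "successively P xs \<Longrightarrow> successively P (take n xs)"
  by (metis append_take_drop_id successively_append_iff)

lemma successively_drop: "successively P xs \<Longrightarrow> successively P (drop n xs)"
  by (metis append_take_drop_id successively_append_iff)

definition adm :: "'a set \<Rightarrow> 'a set set \<Rightarrow> 'a \<Rightarrow> 'a \<Rightarrow> 'a list \<Rightarrow> bool" where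
  "adm V E p q xs \<longleftrightarrow> distinct xs \<and> set xs \<subseteq> V \<and> successively (\<lambda>u v. {u, v} \<in> E) xs
     \<and> xs \<noteq> [] \<and> hd xs \<notin> {p, q}
     \<and> ((p \<in> set xs \<or> q \<in> set xs) \<longrightarrow> (\<exists>pre. xs = pre @ [p, q] \<or> xs = pre @ [q, p]))"

lemma adm_len: "adm V E p q xs \<Longrightarrow> finite V \<Longrightarrow> length xs \<le> card V"
  unfolding adm_def by (metis card_mono distinct_card)

lemma succ_rev_sym: "successively (\<lambda>u v. {u, v} \<in> E) (rev xs) = successively (\<lambda>u v. {u, v} \<in> E) xs"
  by (simp add: insert_commute)

lemma succ_flip: "successively (\<lambda>x y. {y, x} \<in> E) xs = successively (\<lambda>u v. {u, v} \<in> E) xs"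
  by (simp add: insert_commute)

lemma max_nbrs:
  assumes sg: "simple_graph V E" and pq: "{p, q} \<in> E" and a: "adm V E p q xs"
    and mx: "\<forall>ys. adm V E p q ys \<longrightarrow> length ys \<le> length xs"
    and e: "{hd xs, u} \<in> E"
  shows "u \<in> set xs"
proof (rule ccontr)
  assume un: "u \<notin> set xs"
  have uV: "u \<in> V" using sg_edge[OF sg e] by simp
  have pqne: "p \<noteq> q" using sg_edge[OF sg pq] by simp
  have ne: "xs \<noteq> []" and hdn: "hd xs \<notin> {p,q}" and ds: "distinct xs" and sV: "set xs \<subseteq> V"
    and sc: "successively (\<lambda>u v. {u, v} \<in> E) xs" using a by (auto simp: adm_def)
  have e': "{u, hd xs} \<in> E" using e by (simp add: insert_commute)
  show False
  proof (cases "p \<in> set xs \<or> q \<in> set xs")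
    case True
    then obtain pre where pre: "xs = pre @ [p, q] \<or> xs = pre @ [q, p]" using a by (auto simp: adm_def)
    have "u \<notin> {p,q}" using un pre by auto
    then have "adm V E p q (u # xs)"
      using a un uV e' pre unfolding adm_def by (auto simp: successively_Cons)
    then show False using mx by fastforce
  next
    case False
    show False
    proof (cases "u \<in> {p, q}")
      case False2: False
      then have "adm V E p q (u # xs)"
        using a un uV e' False unfolding adm_def by (auto simp: successively_Cons)
      then show False using mx by fastforce
    next
      case True
      have lastn: "last xs \<notin> {p,q}" using False ne last_in_set by fastforce
      have hdrev: "hd (rev xs) = last xs" using ne by (simp add: hd_rev)
      have lastrev: "last (rev xs) = hd xs" using ne by (simp add: last_rev)
      show False
      proof (cases "u = p")
        case up: True
        have "adm V E p q (rev xs @ [p, q])"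
          unfolding adm_def using ds False sV pqne sc pq e up lastn hdrev lastrev ne sg_edge[OF sg pq]
          by (auto simp: successively_append_iff succ_flip)
        then show False using mx by fastforce
      next
        case uq: False
        then have uq': "u = q" using True by auto
        have qp: "{q, p} \<in> E" using pq by (simp add: insert_commute)
        have "adm V E p q (rev xs @ [q, p])"
          unfolding adm_def using ds False sV pqne sc qp e uq' lastn hdrev lastrev ne sg_edge[OF sg pq]
          by (auto simp: successively_append_iff succ_flip)
        then show False using mx by fastforce
      qed
    qed
  qed
qed

lemma two_elems:
  assumes "2 \<le> card A"
  obtains x y where "x \<in> A" "y \<in> A" "x \<noteq> y"
proof -
  have "finite A" using assms card.infinite by fastforce
  obtain x where x: "x \<in> A" using assms by fastforce
  have "card (A - {x}) \<ge> 1" using assms x \<open>finite A\<close> by simp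
  then have "A - {x} \<noteq> {}" by (metis card.empty not_one_le_zero)
  then obtain y where "y \<in> A - {x}" by blast
  then show ?thesis using that x by blast
qed

lemma chords:
  assumes sg: "simple_graph V E" and pq: "{p, q} \<in> E" and a: "adm V E p q xs"
    and mx: "\<forall>ys. adm V E p q ys \<longrightarrow> length ys \<le> length xs"
    and d3: "3 \<le> deg E (hd xs)"
  shows "\<exists>t1 t2. 2 \<le> t1 \<and> t1 < t2 \<and> t2 < length xs \<and> {xs!0, xs!t1} \<in> E \<and> {xs!0, xs!t2} \<in> E"
proof -
  have ne: "xs \<noteq> []" and ds: "distinct xs" using a by (auto simp: adm_def)
  have hd0: "hd xs = xs!0" using ne by (simp add: hd_conv_nth)
  define N where "N = nbrs E (hd xs)"
  have Nsub: "N \<subseteq> set xs"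
    unfolding N_def nbrs_def using max_nbrs[OF sg pq a mx] by (auto simp: insert_commute)
  have fN: "finite N" unfolding N_def using nbrs_finite[OF sg] .
  have c2: "2 \<le> card (N - {xs!1})"
  proof -
    have "card N \<le> card (N - {xs!1}) + 1"
      using card_Diff_singleton_if[of N "xs!1"] fN by (simp split: if_splits)
    then show ?thesis using d3 unfolding N_def deg_def by simp
  qed
  obtain v1 v2 where v: "v1 \<in> N - {xs!1}" "v2 \<in> N - {xs!1}" "v1 \<noteq> v2"
    using two_elems[OF c2] by blast
  have idx: "\<And>v. v \<in> N - {xs!1} \<Longrightarrow> \<exists>t. 2 \<le> t \<and> t < length xs \<and> v = xs!t \<and> {xs!0, xs!t} \<in> E"
  proof -
    fix v assume vN: "v \<in> N - {xs!1}"
    then have "v \<in> set xs" using Nsub by blast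
    then obtain t where t: "t < length xs" "v = xs!t" by (metis in_set_conv_nth)
    have "v \<noteq> hd xs" using vN nbrs_noloop[OF sg] unfolding N_def by blast
    then have "t \<noteq> 0" using t hd0 by (metis)
    moreover have "t \<noteq> 1" using vN t by auto
    ultimately have t2: "2 \<le> t" by arith
    have "{xs!0, xs!t} \<in> E" using vN t hd0 unfolding N_def nbrs_def by (simp add: insert_commute)
    then show "\<exists>t. 2 \<le> t \<and> t < length xs \<and> v = xs!t \<and> {xs!0, xs!t} \<in> E" using t t2 by blast
  qed
  obtain t1 t2 where t1: "2 \<le> t1" "t1 < length xs" "v1 = xs!t1" "{xs!0, xs!t1} \<in> E"
    and t2: "2 \<le> t2" "t2 < length xs" "v2 = xs!t2" "{xs!0, xs!t2} \<in> E"
    using idx v by meson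
  have "t1 \<noteq> t2" using v t1 t2 by auto
  show ?thesis
  proof (cases "t1 < t2")
    case True then show ?thesis using t1 t2 by blast
  next
    case False then have "t2 < t1" using \<open>t1 \<noteq> t2\<close> by simp
    then show ?thesis using t1 t2 by blast
  qed
qed



lemma img_disj:
  assumes "distinct xs" "A \<subseteq> {..<length xs}" "B \<subseteq> {..<length xs}" "A \<inter> B = {}"
  shows "(!) xs ` A \<inter> (!) xs ` B = {}"
proof -
  have inj: "inj_on ((!) xs) {..<length xs}" using assms(1) by (simp add: inj_on_nth)
  have "(!) xs ` (A \<inter> B) = (!) xs ` A \<inter> (!) xs ` B"
    using inj_on_image_Int[OF inj assms(2,3)] .
  then show ?thesis using assms(4) by simp
qed

lemma KT:
  assumes sg: "simple_graph V E" and nk: "\<not> has_K4_minor V E" and pq: "{p, q} \<in> E"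
    and hdeg: "\<forall>v\<in>V - {p, q}. 3 \<le> deg E v"
  shows "V \<subseteq> {p, q}"
proof (rule ccontr)
  assume "\<not> V \<subseteq> {p, q}"
  then obtain w where w: "w \<in> V" "w \<notin> {p, q}" by auto
  have fV: "finite V" using sg by (simp add: simple_graph_def)
  have pqne: "p \<noteq> q" and pV: "p \<in> V" and qV: "q \<in> V" using sg_edge[OF sg pq] by auto
  have adm_w: "adm V E p q [w]" using w by (auto simp: adm_def)
  have bnd: "\<forall>ys. adm V E p q ys \<longrightarrow> length ys < Suc (card V)"
    using adm_len[OF _ fV] by (simp add: le_imp_less_Suc)
  obtain P where P: "adm V E p q P" "\<forall>ys. adm V E p q ys \<longrightarrow> length ys \<le> length P"
    using ex_has_greatest_nat[of "adm V E p q" "[w]" length, OF adm_w bnd] by blast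
  define M where "M = length P"
  define fc where "fc = (\<lambda>xs. LEAST t. 2 \<le> t \<and> t < length xs \<and> {xs!0, xs!t} \<in> E)"
  obtain P0 where P0: "adm V E p q P0 \<and> length P0 = M"
    and P0min: "\<forall>ys. adm V E p q ys \<and> length ys = M \<longrightarrow> fc P0 \<le> fc ys"
    using ex_has_least_nat[of "\<lambda>ys. adm V E p q ys \<and> length ys = M" P fc] P(1) M_def by blast
  have a0: "adm V E p q P0" using P0 by simp
  have max0: "\<forall>ys. adm V E p q ys \<longrightarrow> length ys \<le> length P0" using P(2) P0 M_def by simp
  have ds0: "distinct P0" and sV0: "set P0 \<subseteq> V" and ne0: "P0 \<noteq> []"
    and sc0: "successively (\<lambda>u v. {u, v} \<in> E) P0" and hdn0: "hd P0 \<notin> {p, q}"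
    using a0 by (auto simp: adm_def)
  define L where "L = length P0"
  have hd0: "hd P0 = P0!0" using ne0 by (simp add: hd_conv_nth)
  have hdV: "hd P0 \<in> V" using ne0 sV0 by auto
  have d3: "3 \<le> deg E (hd P0)" using hdeg hdV hdn0 by auto
  obtain t1 t2 where tt: "2 \<le> t1" "t1 < t2" "t2 < L" "{P0!0, P0!t1} \<in> E" "{P0!0, P0!t2} \<in> E"
    using chords[OF sg pq a0 max0 d3] L_def by blast
  define i where "i = fc P0"
  have iex: "2 \<le> t1 \<and> t1 < length P0 \<and> {P0!0, P0!t1} \<in> E" using tt L_def by simp
  have ip: "2 \<le> i \<and> i < L \<and> {P0!0, P0!i} \<in> E"
    unfolding i_def fc_def L_def by (rule LeastI[of _ t1], rule iex)
  have ile: "i \<le> t1" unfolding i_def fc_def by (rule Least_le, rule iex)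
  define j where "j = t2"
  have jp: "i < j" "j < L" "{P0!0, P0!j} \<in> E" using tt ile j_def by auto
  define Q where "Q = rev (take i P0) @ drop i P0"
  have lenQ: "length Q = L" using ip by (simp add: Q_def L_def)
  have Qlt: "\<And>k. k < i \<Longrightarrow> Q!k = P0!(i - Suc k)"
    using ip by (simp add: Q_def L_def nth_append rev_nth min_def)
  have Qge: "\<And>k. i \<le> k \<Longrightarrow> k < L \<Longrightarrow> Q!k = P0!k"
    using ip by (simp add: Q_def L_def nth_append min_def)
  have setQ: "set Q = set P0" by (metis Q_def append_take_drop_id set_append set_rev)
  have distQ: "distinct Q"
    using ds0 by (simp add: Q_def set_take_disj_set_drop_if_distinct)
  have scQ: "successively (\<lambda>u v. {u, v} \<in> E) Q"
  proof -
    have s1: "successively (\<lambda>u v. {u, v} \<in> E) (rev (take i P0))"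
      using successively_take[OF sc0] by (simp add: succ_flip)
    have s2: "successively (\<lambda>u v. {u, v} \<in> E) (drop i P0)" using successively_drop[OF sc0] .
    have l1: "last (rev (take i P0)) = P0!0" using ip ne0
      by (simp add: last_rev hd_take hd_conv_nth)
    have h2: "hd (drop i P0) = P0!i" using ip L_def by (simp add: hd_drop_conv_nth)
    show ?thesis unfolding Q_def using s1 s2 l1 h2 ip by (simp add: successively_append_iff)
  qed
  have Qne: "Q \<noteq> []" using lenQ ip by auto
  have hdQ: "hd Q = P0!(i - 1)" using Qlt[of 0] ip Qne by (simp add: hd_conv_nth)
  have iL2: "i + 2 \<le> L" using jp by simp
  have pre_fact: "p \<in> set P0 \<or> q \<in> set P0 \<Longrightarrow> P0!(i - 1) \<notin> {p, q} \<and>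
      (\<exists>pre. Q = pre @ [p, q] \<or> Q = pre @ [q, p])"
  proof -
    assume "p \<in> set P0 \<or> q \<in> set P0"
    then obtain pre where pre: "P0 = pre @ [p, q] \<or> P0 = pre @ [q, p]" using a0 by (auto simp: adm_def)
    have lpre: "length pre + 2 = L" using pre L_def by auto
    have ilp: "i \<le> length pre" using lpre iL2 by simp
    have pqn: "p \<notin> set pre" "q \<notin> set pre" using pre ds0 by auto
    have "P0!(i-1) = pre!(i-1)" using pre ilp ip by (auto simp: nth_append)
    moreover have "pre!(i-1) \<in> set pre" using ilp ip by (intro nth_mem) arith
    ultimately have c1: "P0!(i - 1) \<notin> {p, q}" using pqn by auto
    have "Q = (rev (take i pre) @ drop i pre) @ [p, q] \<or> Q = (rev (take i pre) @ drop i pre) @ [q, p]"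
      using pre ilp by (auto simp: Q_def)
    then show ?thesis using c1 by blast
  qed
  have hdQn: "hd Q \<notin> {p, q}"
  proof (cases "p \<in> set P0 \<or> q \<in> set P0")
    case True then show ?thesis using pre_fact hdQ by simp
  next
    case False
    have "hd Q \<in> set P0" using Qne setQ by (metis hd_in_set)
    then show ?thesis using False by auto
  qed
  have admQ: "adm V E p q Q"
    unfolding adm_def using distQ setQ sV0 scQ Qne hdQn pre_fact by auto
  have maxQ: "\<forall>ys. adm V E p q ys \<longrightarrow> length ys \<le> length Q" using max0 lenQ L_def by simp
  define u where "u = P0!(i - 1)"
  have uV: "u \<in> V"
  proof -
    have "i - 1 < length P0" using ip L_def by arith
    then show ?thesis using sV0 u_def nth_mem by blast
  qed
  have du: "3 \<le> deg E u" using hdeg uV hdQn hdQ u_def by auto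
  have Nu: "nbrs E u \<subseteq> set P0"
    using max_nbrs[OF sg pq admQ maxQ] hdQ setQ unfolding nbrs_def u_def by (auto simp: insert_commute)
  have fNu: "finite (nbrs E u)" using nbrs_finite[OF sg] .
  have "card (nbrs E u) \<le> card ((nbrs E u - {P0!(i-2), P0!i}) \<union> {P0!(i-2), P0!i})"
    by (rule card_mono) (use fNu in auto)
  also have "\<dots> \<le> card (nbrs E u - {P0!(i-2), P0!i}) + card {P0!(i-2), P0!i}"
    by (rule card_Un_le)
  finally have "card (nbrs E u) \<le> card (nbrs E u - {P0!(i-2), P0!i}) + card {P0!(i-2), P0!i}" .
  moreover have "card {P0!(i-2), P0!i} \<le> 2" by (simp add: card_insert_le_m1)
  ultimately have "card (nbrs E u - {P0!(i-2), P0!i}) \<ge> 1" using du unfolding deg_def by linarith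
  then have "nbrs E u - {P0!(i-2), P0!i} \<noteq> {}" by (metis card.empty not_one_le_zero)
  then obtain v where v: "v \<in> nbrs E u" "v \<noteq> P0!(i-2)" "v \<noteq> P0!i" by blast
  obtain m where m: "m < L" "v = P0!m" using v Nu L_def by (metis in_set_conv_nth subsetD)
  have um: "{u, P0!m} \<in> E" using v m unfolding nbrs_def by (simp add: insert_commute)
  have mne: "m \<noteq> i - 1" using v m nbrs_noloop[OF sg] u_def by auto
  have mne2: "m \<noteq> i - 2" "m \<noteq> i" using v m by auto
  have mgt: "i < m"
  proof (rule ccontr)
    assume "\<not> i < m"
    then have mlt: "m < i - 2" using mne mne2 by arith
    define k where "k = i - 1 - m"
    have k: "2 \<le> k" "k < i" using mlt ip by (auto simp: k_def)
    have Qk: "Q!k = P0!m" using Qlt[of k] k by (simp add: k_def)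
    have Q0: "Q!0 = u" using Qlt[of 0] ip u_def by simp
    have "fc Q \<le> k" unfolding fc_def
      by (rule Least_le) (use k Qk Q0 um lenQ ip in auto)
    moreover have "fc P0 \<le> fc Q" using P0min admQ lenQ L_def P0 by simp
    ultimately show False using k i_def by simp
  qed
  define mn where "mn = min m j"
  define mx where "mx = max m j"
  have mnp: "i < mn" "mn \<le> mx" "mx < L" using mgt jp m by (auto simp: mn_def mx_def)
  define B0 where "B0 = (!) P0 ` {0..0}"
  define B1 where "B1 = (!) P0 ` {1..i-1}"
  define B2 where "B2 = (!) P0 ` {i..mn-1}"
  define B3 where "B3 = (!) P0 ` {mn..mx}"
  have "has_K4_minor V E"
  proof (rule K4I[of B0 B1 B2 B3])
    show "B0 \<noteq> {}" "B1 \<noteq> {}" "B2 \<noteq> {}" "B3 \<noteq> {}" using ip mnp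
      by (auto simp: B0_def B1_def B2_def B3_def)
    have sub: "\<And>l r. r < L \<Longrightarrow> (!) P0 ` {l..r} \<subseteq> V" using sV0 L_def by auto
    show "B0 \<subseteq> V" unfolding B0_def by (rule sub) (use ip mnp in arith)
    show "B1 \<subseteq> V" unfolding B1_def by (rule sub) (use ip mnp in arith)
    show "B2 \<subseteq> V" unfolding B2_def by (rule sub) (use ip mnp in arith)
    show "B3 \<subseteq> V" unfolding B3_def by (rule sub) (use ip mnp in arith)
    show "connected_in E B0" unfolding B0_def by (rule seg_conn[OF sc0]) (use ip mnp L_def in arith)+
    show "connected_in E B1" unfolding B1_def by (rule seg_conn[OF sc0]) (use ip mnp L_def in arith)+
    show "connected_in E B2" unfolding B2_def by (rule seg_conn[OF sc0]) (use ip mnp L_def in arith)+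
    show "connected_in E B3" unfolding B3_def by (rule seg_conn[OF sc0]) (use ip mnp L_def in arith)+
    have dj: "\<And>l r l' r'. r < l' \<Longrightarrow> l' \<le> r' \<Longrightarrow> r' < L \<Longrightarrow> (!) P0 ` {l..r} \<inter> (!) P0 ` {l'..r'} = {}"
    proof -
      fix l r l' r' :: nat assume "r < l'" "l' \<le> r'" "r' < L"
      then show "(!) P0 ` {l..r} \<inter> (!) P0 ` {l'..r'} = {}"
        by (intro img_disj) (use ds0 L_def in auto)
    qed
    show "B0 \<inter> B1 = {}" unfolding B0_def B1_def by (rule dj) (use ip mnp in arith)+
    show "B0 \<inter> B2 = {}" unfolding B0_def B2_def by (rule dj) (use ip mnp in arith)+
    show "B0 \<inter> B3 = {}" unfolding B0_def B3_def by (rule dj) (use ip mnp in arith)+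
    show "B1 \<inter> B2 = {}" unfolding B1_def B2_def by (rule dj) (use ip mnp in arith)+
    show "B1 \<inter> B3 = {}" unfolding B1_def B3_def by (rule dj) (use ip mnp in arith)+
    show "B2 \<inter> B3 = {}" unfolding B2_def B3_def by (rule dj) (use ip mnp in arith)+
    have e01: "{P0!0, P0!1} \<in> E" using successively_nth[OF sc0, of 0] ip L_def by simp
    have ei: "{P0!(i-1), P0!i} \<in> E" using successively_nth[OF sc0, of "i-1"] ip L_def by simp
    have emn: "{P0!(mn-1), P0!mn} \<in> E" using successively_nth[OF sc0, of "mn-1"] mnp L_def by simp
    have jin: "j \<in> {mn..mx}" "m \<in> {mn..mx}" by (auto simp: mn_def mx_def)
    have i1: "1 \<in> {1..i-1}" "i - 1 \<in> {1..i-1}" using ip by auto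
    have i2: "i \<in> {i..mn-1}" "mn - 1 \<in> {i..mn-1}" using mnp by auto
    have i0: "0 \<in> {0..0::nat}" by simp
    have adjI: "\<And>X Y a b. a \<in> X \<Longrightarrow> b \<in> Y \<Longrightarrow> {P0!a, P0!b} \<in> E \<Longrightarrow> adjs E ((!) P0 ` X) ((!) P0 ` Y)"
      unfolding adjs_def by blast
    show "adjs E B0 B1" unfolding B0_def B1_def by (rule adjI[OF i0 i1(1) e01])
    show "adjs E B0 B2" unfolding B0_def B2_def by (rule adjI[OF i0 i2(1)]) (use ip in simp)
    show "adjs E B0 B3" unfolding B0_def B3_def by (rule adjI[OF i0 jin(1)]) (use jp in simp)
    show "adjs E B1 B2" unfolding B1_def B2_def by (rule adjI[OF i1(2) i2(1) ei])
    show "adjs E B1 B3" unfolding B1_def B3_def by (rule adjI[OF i1(2) jin(2)]) (use um u_def in simp)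
    show "adjs E B2 B3" unfolding B2_def B3_def by (rule adjI[OF i2(2) _ emn]) (use mnp in simp)
  qed
  then show False using nk by simp
qed



lemma KT':
  assumes sg: "simple_graph V E" and nk: "\<not> has_K4_minor V E" and pq: "{p, q} \<in> E"
    and w: "w \<in> V" "w \<notin> {p, q}"
  shows "\<exists>v\<in>V - {p, q}. deg E v \<le> 2"
proof (rule ccontr)
  assume neg: "\<not> ?thesis"
  have "\<forall>v\<in>V - {p, q}. 3 \<le> deg E v"
  proof
    fix v assume "v \<in> V - {p, q}"
    then have "\<not> deg E v \<le> 2" using neg by blast
    then show "3 \<le> deg E v" by simp
  qed
  then show False using KT[OF sg nk pq] w by auto
qed

lemma rtranclp_lift:
  assumes "\<And>u v. R' u v \<Longrightarrow> R\<^sup>*\<^sup>* u v" "R'\<^sup>*\<^sup>* x y"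
  shows "R\<^sup>*\<^sup>* x y"
  using assms(2) by (induction rule: rtranclp_induct) (auto intro: rtranclp_trans assms(1))

lemma connected_mono:
  assumes "connected_in E' S" "E' \<subseteq> E"
  shows "connected_in E S"
  unfolding connected_in_def
proof (intro ballI)
  fix u v assume "u \<in> S" "v \<in> S"
  then have "(\<lambda>x y. x \<in> S \<and> y \<in> S \<and> {x, y} \<in> E')\<^sup>*\<^sup>* u v" using assms(1) by (simp add: connected_in_def)
  then show "(\<lambda>x y. x \<in> S \<and> y \<in> S \<and> {x, y} \<in> E)\<^sup>*\<^sup>* u v"
    by (rule rtranclp_lift[rotated]) (use assms(2) in auto)
qed

lemma K4_mono:
  assumes "has_K4_minor V' E'" "V' \<subseteq> V" "E' \<subseteq> E"
  shows "has_K4_minor V E"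
proof -
  obtain B :: "nat \<Rightarrow> 'a set" where
    B1: "\<forall>i<4. B i \<noteq> {} \<and> B i \<subseteq> V' \<and> connected_in E' (B i)" and
    B2: "\<forall>i<4. \<forall>j<4. i \<noteq> j \<longrightarrow> B i \<inter> B j = {} \<and> (\<exists>u\<in>B i. \<exists>v\<in>B j. {u, v} \<in> E')"
    using assms(1) unfolding has_K4_minor_def by blast
  have "\<forall>i<4. B i \<noteq> {} \<and> B i \<subseteq> V \<and> connected_in E (B i)"
    using B1 assms(2,3) connected_mono by blast
  moreover have "\<forall>i<4. \<forall>j<4. i \<noteq> j \<longrightarrow> B i \<inter> B j = {} \<and> (\<exists>u\<in>B i. \<exists>v\<in>B j. {u, v} \<in> E)"
    using B2 assms(3) by blast
  ultimately show ?thesis unfolding has_K4_minor_def by blast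
qed

definition supp :: "'a set set \<Rightarrow> 'a \<Rightarrow> 'a \<Rightarrow> 'a \<Rightarrow> 'a set set" where
  "supp E x a b = {e \<in> E. x \<notin> e} \<union> {{a, b}}"

lemma supp_mem: "e \<in> supp E x a b \<longleftrightarrow> (e \<in> E \<and> x \<notin> e) \<or> e = {a, b}"
  by (auto simp: supp_def)

lemma nbrs2:
  assumes "simple_graph V E" "deg E v = 2"
  obtains a b where "a \<noteq> b" "nbrs E v = {a, b}"
  using assms unfolding deg_def by (metis card_2_iff)

lemma in_nbrs: "a \<in> nbrs E v \<longleftrightarrow> {a, v} \<in> E"
  by (simp add: nbrs_def)

lemma supp_props:
  assumes sg: "simple_graph V E" and nx: "nbrs E x = {a, b}" and ab: "a \<noteq> b"
  shows "simple_graph (V - {x}) (supp E x a b)"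
    and "a \<in> V" "b \<in> V" "a \<noteq> x" "b \<noteq> x"
    and "{a, x} \<in> E" "{b, x} \<in> E"
    and "\<And>v. v \<noteq> x \<Longrightarrow> nbrs (supp E x a b) v =
           (nbrs E v - {x}) \<union> (if v = a then {b} else {}) \<union> (if v = b then {a} else {})"
    and "\<And>v. v \<noteq> x \<Longrightarrow> v \<noteq> a \<Longrightarrow> v \<noteq> b \<Longrightarrow> nbrs (supp E x a b) v = nbrs E v"
    and "\<And>v. v \<noteq> x \<Longrightarrow> deg (supp E x a b) v =
           deg E v - (if (v = a \<or> v = b) \<and> {a, b} \<in> E then 1 else 0)"
proof -
  have "a \<in> nbrs E x" "b \<in> nbrs E x" using nx by auto
  then have ax: "{a, x} \<in> E" "{b, x} \<in> E" by (auto simp: nbrs_def)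
  show "{a, x} \<in> E" "{b, x} \<in> E" using ax by auto
  have aV: "a \<in> V" "b \<in> V" "a \<noteq> x" "b \<noteq> x" using sg_edge[OF sg ax(1)] sg_edge[OF sg ax(2)] by auto
  show "a \<in> V" "b \<in> V" "a \<noteq> x" "b \<noteq> x" using aV by auto
  show "simple_graph (V - {x}) (supp E x a b)"
    unfolding simple_graph_def
  proof (intro conjI ballI)
    show "finite (V - {x})" using sg by (simp add: simple_graph_def)
  next
    fix e assume "e \<in> supp E x a b"
    then consider "e \<in> E" "x \<notin> e" | "e = {a, b}" by (auto simp: supp_def)
    then show "\<exists>u v. u \<noteq> v \<and> u \<in> V - {x} \<and> v \<in> V - {x} \<and> e = {u, v}"
    proof cases
      case 1
      then obtain u v where "u \<noteq> v" "u \<in> V" "v \<in> V" "e = {u, v}" using sg unfolding simple_graph_def by blast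
      then show ?thesis using 1 by auto
    next
      case 2 then show ?thesis using aV ab by auto
    qed
  qed
  show nb: "\<And>v. v \<noteq> x \<Longrightarrow> nbrs (supp E x a b) v =
           (nbrs E v - {x}) \<union> (if v = a then {b} else {}) \<union> (if v = b then {a} else {})"
  proof -
    fix v assume "v \<noteq> x"
    show "nbrs (supp E x a b) v =
           (nbrs E v - {x}) \<union> (if v = a then {b} else {}) \<union> (if v = b then {a} else {})"
      unfolding nbrs_def supp_mem using \<open>v \<noteq> x\<close> ab by (auto simp: doubleton_eq_iff)
  qed
  have xn: "\<And>v. v \<noteq> a \<Longrightarrow> v \<noteq> b \<Longrightarrow> x \<notin> nbrs E v"
    using nx by (auto simp: nbrs_def insert_commute)
  show nb2: "\<And>v. v \<noteq> x \<Longrightarrow> v \<noteq> a \<Longrightarrow> v \<noteq> b \<Longrightarrow> nbrs (supp E x a b) v = nbrs E v"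
    using nb xn by auto
  show "\<And>v. v \<noteq> x \<Longrightarrow> deg (supp E x a b) v =
           deg E v - (if (v = a \<or> v = b) \<and> {a, b} \<in> E then 1 else 0)"
  proof -
    fix v assume vx: "v \<noteq> x"
    have fin: "finite (nbrs E v)" using nbrs_finite[OF sg] .
    show "deg (supp E x a b) v = deg E v - (if (v = a \<or> v = b) \<and> {a, b} \<in> E then 1 else 0)"
    proof (cases "v = a")
      case True
      have xin: "x \<in> nbrs E a" using ax by (simp add: nbrs_def insert_commute)
      have "nbrs (supp E x a b) v = insert b (nbrs E a - {x})" using nb[OF vx] True ab by auto
      moreover have "card (nbrs E a - {x}) = deg E a - 1" using xin fin True by (simp add: deg_def)
      moreover have "b \<in> nbrs E a \<longleftrightarrow> {a, b} \<in> E" by (simp add: nbrs_def insert_commute)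
      moreover have "deg E a \<ge> 1" using xin fin True unfolding deg_def by (metis card_0_eq empty_iff less_one not_le)
      ultimately show ?thesis using True fin aV ab unfolding deg_def by (auto simp: card_insert_if)
    next
      case False
      show ?thesis
      proof (cases "v = b")
        case True
        have xin: "x \<in> nbrs E b" using ax by (simp add: nbrs_def insert_commute)
        have "nbrs (supp E x a b) v = insert a (nbrs E b - {x})" using nb[OF vx] True ab by auto
        moreover have "card (nbrs E b - {x}) = deg E b - 1" using xin fin True by (simp add: deg_def)
        moreover have "a \<in> nbrs E b \<longleftrightarrow> {a, b} \<in> E" by (simp add: nbrs_def)
        moreover have "deg E b \<ge> 1" using xin fin True unfolding deg_def by (metis card_0_eq empty_iff less_one not_le)
        ultimately show ?thesis using True fin aV ab unfolding deg_def by (auto simp: card_insert_if)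
      next
        case F2: False
        then show ?thesis using nb2[OF vx False F2] False by (simp add: deg_def)
      qed
    qed
  qed
qed

lemma supp_K4:
  assumes sg: "simple_graph V E" and nx: "nbrs E x = {a, b}" and ab: "a \<noteq> b"
    and h: "has_K4_minor (V - {x}) (supp E x a b)"
  shows "has_K4_minor V E"
proof -
  have "a \<in> nbrs E x" "b \<in> nbrs E x" using nx by auto
  then have "{a, x} \<in> E" "{b, x} \<in> E" by (auto simp: nbrs_def)
  then have ax: "{a, x} \<in> E" "{x, b} \<in> E" by (auto simp: insert_commute)
  have axne: "a \<noteq> x" "b \<noteq> x" using sg_edge[OF sg ax(1)] sg_edge[OF sg ax(2)] by auto
  obtain B :: "nat \<Rightarrow> 'a set" where
    B1: "\<forall>i<4. B i \<noteq> {} \<and> B i \<subseteq> V - {x} \<and> connected_in (supp E x a b) (B i)" and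
    B2: "\<forall>i<4. \<forall>j<4. i \<noteq> j \<longrightarrow> B i \<inter> B j = {} \<and> (\<exists>u\<in>B i. \<exists>v\<in>B j. {u, v} \<in> supp E x a b)"
    using h unfolding has_K4_minor_def by blast
  define C where "C = (\<lambda>i. if a \<in> B i then insert x (B i) else B i)"
  have xV: "x \<in> V" using sg_edge[OF sg ax(1)] by simp
  have C1: "\<forall>i<4. C i \<noteq> {} \<and> C i \<subseteq> V \<and> connected_in E (C i)"
  proof (intro allI impI conjI)
    fix i :: nat assume i4: "i < 4"
    show "C i \<noteq> {}" using B1 i4 by (auto simp: C_def)
    show "C i \<subseteq> V" using B1 i4 xV by (auto simp: C_def)
    show "connected_in E (C i)" unfolding connected_in_def
    proof (intro ballI)
      define R where "R = (\<lambda>u v. u \<in> C i \<and> v \<in> C i \<and> {u, v} \<in> E)"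
      define R' where "R' = (\<lambda>u v. u \<in> B i \<and> v \<in> B i \<and> {u, v} \<in> supp E x a b)"
      have BC: "B i \<subseteq> C i" by (auto simp: C_def)
      have step: "\<And>u v. R' u v \<Longrightarrow> R\<^sup>*\<^sup>* u v"
      proof -
        fix u v assume "R' u v"
        then have uv: "u \<in> B i" "v \<in> B i" "{u, v} \<in> supp E x a b" by (auto simp: R'_def)
        show "R\<^sup>*\<^sup>* u v"
        proof (cases "{u, v} \<in> E")
          case True then show ?thesis using uv BC by (auto simp: R_def)
        next
          case False
          then have "{u, v} = {a, b}" using uv(3) by (auto simp: supp_mem)
          then have cases: "(u = a \<and> v = b) \<or> (u = b \<and> v = a)" by (auto simp: doubleton_eq_iff)
          have aB: "a \<in> B i" using cases uv by auto
          then have xC: "x \<in> C i" by (auto simp: C_def)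
          have aC: "a \<in> C i" "b \<in> C i" using cases uv BC by auto
          have r1: "R a x" "R x a" "R x b" "R b x" using xC aC ax by (auto simp: R_def insert_commute)
          show ?thesis using cases r1
            by (metis rtranclp.rtrancl_refl rtranclp.rtrancl_into_rtrancl)
        qed
      qed
      have conB: "\<And>u v. u \<in> B i \<Longrightarrow> v \<in> B i \<Longrightarrow> R\<^sup>*\<^sup>* u v"
      proof -
        fix u v assume "u \<in> B i" "v \<in> B i"
        then have "R'\<^sup>*\<^sup>* u v" using B1 i4 by (auto simp: connected_in_def R'_def)
        then show "R\<^sup>*\<^sup>* u v" using rtranclp_lift[of R' R, OF step] by blast
      qed
      fix u v assume uC: "u \<in> C i" and vC: "v \<in> C i"
      show "(\<lambda>x y. x \<in> C i \<and> y \<in> C i \<and> {x, y} \<in> E)\<^sup>*\<^sup>* u v"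
      proof -
        have xa: "x \<in> C i \<Longrightarrow> R x a \<and> R a x \<and> a \<in> B i"
        proof -
          assume "x \<in> C i"
          then have aB: "a \<in> B i" using B1 i4 by (auto simp: C_def split: if_splits)
          then show ?thesis using \<open>x \<in> C i\<close> ax BC by (auto simp: R_def insert_commute)
        qed
        have "R\<^sup>*\<^sup>* u v"
        proof (cases "u = x")
          case True
          show ?thesis
          proof (cases "v = x")
            case True then show ?thesis using \<open>u = x\<close> by simp
          next
            case False
            then have "v \<in> B i" using vC by (auto simp: C_def split: if_splits)
            then show ?thesis using xa uC True conB
              by (metis converse_rtranclp_into_rtranclp)
          qed
        next
          case False
          then have uB: "u \<in> B i" using uC by (auto simp: C_def split: if_splits)
          show ?thesis
          proof (cases "v = x")
            case True
            then show ?thesis using xa vC uB conB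
              by (metis rtranclp.rtrancl_into_rtrancl)
          next
            case False
            then have "v \<in> B i" using vC by (auto simp: C_def split: if_splits)
            then show ?thesis using uB conB by simp
          qed
        qed
        then show ?thesis by (simp add: R_def)
      qed
    qed
  qed
  have C2: "\<forall>i<4. \<forall>j<4. i \<noteq> j \<longrightarrow> C i \<inter> C j = {} \<and> (\<exists>u\<in>C i. \<exists>v\<in>C j. {u, v} \<in> E)"
  proof (intro allI impI conjI)
    fix i j :: nat assume ij: "i < 4" "j < 4" "i \<noteq> j"
    have dj: "B i \<inter> B j = {}" using B2 ij by blast
    have xn: "x \<notin> B i" "x \<notin> B j" using B1 ij by auto
    show "C i \<inter> C j = {}" using dj xn by (auto simp: C_def)
    obtain u v where uv: "u \<in> B i" "v \<in> B j" "{u, v} \<in> supp E x a b" using B2 ij by blast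
    show "\<exists>u\<in>C i. \<exists>v\<in>C j. {u, v} \<in> E"
    proof (cases "{u, v} \<in> E")
      case True then show ?thesis using uv by (auto simp: C_def)
    next
      case False
      then have "{u, v} = {a, b}" using uv(3) by (auto simp: supp_mem)
      then have cases: "(u = a \<and> v = b) \<or> (u = b \<and> v = a)" by (auto simp: doubleton_eq_iff)
      then show ?thesis
      proof
        assume "u = a \<and> v = b"
        then have "x \<in> C i" "b \<in> C j" using uv by (auto simp: C_def)
        then show ?thesis using ax by blast
      next
        assume "u = b \<and> v = a"
        then have "x \<in> C j" "b \<in> C i" using uv by (auto simp: C_def)
        then show ?thesis using ax by (metis insert_commute)
      qed
    qed
  qed
  show ?thesis unfolding has_K4_minor_def using C1 C2 by blast
qed

lemma supp_nk:
  assumes sg: "simple_graph V E" and nk: "\<not> has_K4_minor V E" and nx: "nbrs E x = {a, b}" and ab: "a \<noteq> b"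
  shows "\<not> has_K4_minor (V - {x}) (supp E x a b)"
  using supp_K4[OF sg nx ab] nk by blast



lemma tf_tri: "triangle_free E \<Longrightarrow> {u, v} \<in> E \<Longrightarrow> {v, w} \<in> E \<Longrightarrow> {u, w} \<in> E \<Longrightarrow> False"
  unfolding triangle_free_def by blast

lemma nb_edge: "nbrs E x = {a, b} \<Longrightarrow> {a, x} \<in> E \<and> {x, a} \<in> E \<and> {b, x} \<in> E \<and> {x, b} \<in> E"
proof -
  assume "nbrs E x = {a, b}"
  then have "a \<in> nbrs E x" "b \<in> nbrs E x" by auto
  then have "{a, x} \<in> E" "{b, x} \<in> E" by (auto simp: nbrs_def)
  then show ?thesis by (auto simp: insert_commute)
qed

lemma tf_nb: "triangle_free E \<Longrightarrow> nbrs E x = {a, b} \<Longrightarrow> {a, b} \<notin> E"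
  using nb_edge tf_tri by metis

lemma deg_le_sub: "simple_graph V E \<Longrightarrow> nbrs E v \<subseteq> A \<Longrightarrow> finite A \<Longrightarrow> deg E v \<le> card A"
  unfolding deg_def by (simp add: card_mono)

lemma Lfull: "finite L \<Longrightarrow> card L \<le> 3 \<Longrightarrow> x \<in> L \<Longrightarrow> y \<in> L \<Longrightarrow> z \<in> L \<Longrightarrow> distinct [x, y, z]
  \<Longrightarrow> L = {x, y, z}"
proof -
  assume a: "finite L" "card L \<le> 3" "x \<in> L" "y \<in> L" "z \<in> L" "distinct [x, y, z]"
  have sub: "{x, y, z} \<subseteq> L" using a by auto
  have c3: "card {x, y, z} = 3" using a(6) by auto
  have "card {x, y, z} \<le> card L" using card_mono[OF a(1) sub] .
  then have "card {x, y, z} = card L" using a(2) c3 by simp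
  then show ?thesis using card_subset_eq[OF a(1) sub] by simp
qed

lemma L4: "finite L \<Longrightarrow> card L \<le> 3 \<Longrightarrow> {a, b, c, d} \<subseteq> L \<Longrightarrow> distinct [a, b, c, d] \<Longrightarrow> False"
proof -
  assume "finite L" "card L \<le> 3" "{a, b, c, d} \<subseteq> L" "distinct [a, b, c, d]"
  then have "card {a, b, c, d} \<le> 3" by (meson card_mono le_trans)
  moreover have "card {a, b, c, d} = 4" using \<open>distinct [a, b, c, d]\<close> by auto
  ultimately show False by simp
qed

lemma deg_le2: "simple_graph V E \<Longrightarrow> nbrs E v \<subseteq> {p, q} \<Longrightarrow> deg E v \<le> 2"
proof -
  assume a: "simple_graph V E" "nbrs E v \<subseteq> {p, q}"
  have "deg E v \<le> card {p, q}" by (rule deg_le_sub[OF a]) simp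
  also have "card {p, q} \<le> 2" by (simp add: card_insert_if)
  finally show ?thesis .
qed

lemma deg_le1: "simple_graph V E \<Longrightarrow> nbrs E v \<subseteq> {p} \<Longrightarrow> deg E v \<le> 1"
proof -
  assume a: "simple_graph V E" "nbrs E v \<subseteq> {p}"
  have "deg E v \<le> card {p}" by (rule deg_le_sub[OF a]) simp
  then show ?thesis by simp
qed

lemma deg_nb_in: "simple_graph V E \<Longrightarrow> nbrs E v \<subseteq> V"
  by (rule nbrs_sub)



lemma caseIIa:
  assumes sg: "simple_graph V E" and tf: "triangle_free E" and nk: "\<not> has_K4_minor V E"
    and d2: "\<forall>v\<in>V. 2 \<le> deg E v"
    and cL: "card {v\<in>V. deg E v \<le> 2} \<le> 3"
    and xV: "x \<in> V" and yV: "y \<in> V" and xy: "{x, y} \<in> E"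
    and dx: "deg E x = 2" and dy: "deg E y = 2"
  shows False
proof -
  define L where "L = {v\<in>V. deg E v \<le> 2}"
  have fV: "finite V" using sg_finite[OF sg] .
  have fL: "finite L" using fV by (simp add: L_def)
  have cL': "card L \<le> 3" using cL by (simp add: L_def)
  have xne: "x \<noteq> y" using sg_edge[OF sg xy] by simp
  obtain a0 b0 where ab0: "a0 \<noteq> b0" "nbrs E x = {a0, b0}" using nbrs2[OF sg dx] by blast
  have yinx: "y \<in> nbrs E x" using xy by (simp add: nbrs_def insert_commute)
  obtain a where nx: "nbrs E x = {a, y}" and ay: "a \<noteq> y"
    using ab0 yinx by (metis insert_commute insertE singletonD)
  obtain c0 d0 where cd0: "c0 \<noteq> d0" "nbrs E y = {c0, d0}" using nbrs2[OF sg dy] by blast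
  have xiny: "x \<in> nbrs E y" using xy by (simp add: nbrs_def)
  obtain b where ny: "nbrs E y = {x, b}" and bx: "b \<noteq> x"
    using cd0 xiny by (metis insert_commute insertE singletonD)
  have ea: "{a, x} \<in> E" "{x, a} \<in> E" using nb_edge[OF nx] by auto
  have eb: "{b, y} \<in> E" "{y, b} \<in> E" using nb_edge[OF ny] by auto
  have aV: "a \<in> V" "a \<noteq> x" using sg_edge[OF sg ea(1)] by auto
  have bV: "b \<in> V" "b \<noteq> y" using sg_edge[OF sg eb(1)] by auto
  have nay: "{a, y} \<notin> E" using tf_nb[OF tf nx] .
  have nxb: "{x, b} \<notin> E" using tf_nb[OF tf ny] .
  have abne: "a \<noteq> b"
  proof
    assume "a = b"
    then show False using nay eb(2) by (simp add: insert_commute)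
  qed
  define G1 where "G1 = supp E x a y"
  note s1 = supp_props[OF sg nx ay]
  have sg1: "simple_graph (V - {x}) G1" using s1(1) by (simp add: G1_def)
  have nk1: "\<not> has_K4_minor (V - {x}) G1" using supp_nk[OF sg nk nx ay] by (simp add: G1_def)
  have deg1: "\<And>v. v \<noteq> x \<Longrightarrow> deg G1 v = deg E v" using s1(10) nay by (simp add: G1_def)
  have ny1: "nbrs G1 y = {a, b}" using s1(8)[OF xne[symmetric]] ny bx ay by (auto simp: G1_def)
  have ab1: "{a, b} \<in> G1 \<longleftrightarrow> {a, b} \<in> E"
    using aV bx abne bV unfolding G1_def supp_mem by (auto simp: doubleton_eq_iff)
  define G2 where "G2 = supp G1 y a b"
  note s2 = supp_props[OF sg1 ny1 abne]
  have sg2: "simple_graph (V - {x} - {y}) G2" using s2(1) by (simp add: G2_def)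
  have nk2: "\<not> has_K4_minor (V - {x} - {y}) G2" using supp_nk[OF sg1 nk1 ny1 abne] by (simp add: G2_def)
  have ab2: "{a, b} \<in> G2" by (simp add: G2_def supp_mem)
  have deg2: "\<And>v. v \<noteq> x \<Longrightarrow> v \<noteq> y \<Longrightarrow> deg G2 v = deg E v - (if (v = a \<or> v = b) \<and> {a, b} \<in> E then 1 else 0)"
    using s2(10) deg1 ab1 by (simp add: G2_def)
  have nbz: "\<And>z. z \<in> V \<Longrightarrow> z \<notin> {x, y, a, b} \<Longrightarrow> nbrs G2 z = nbrs E z"
  proof -
    fix z assume "z \<in> V" "z \<notin> {x, y, a, b}"
    then have "nbrs G1 z = nbrs E z" using s1(9)[of z] by (simp add: G1_def)
    then show "nbrs G2 z = nbrs E z" using s2(9)[of z] \<open>z \<notin> {x, y, a, b}\<close> by (simp add: G2_def)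
  qed
  have memG2: "\<And>e g. x \<notin> {e, g} \<Longrightarrow> y \<notin> {e, g} \<Longrightarrow> {e, g} \<notin> E \<Longrightarrow> ({e, g} \<in> G2 \<longleftrightarrow> {e, g} = {a, b})"
    unfolding G2_def G1_def supp_mem by auto
  have Lfacts: "\<And>v. v \<in> V \<Longrightarrow> deg E v \<le> 2 \<Longrightarrow> v \<in> L" by (simp add: L_def)
  have xL: "x \<in> L" "y \<in> L" using xV yV dx dy by (auto simp: L_def)
  show False
  proof (cases "{a, b} \<in> E")
    case False
    have dg2: "\<And>v. v \<noteq> x \<Longrightarrow> v \<noteq> y \<Longrightarrow> deg G2 v = deg E v" using deg2 False by simp
    have wit: "\<exists>w. w \<in> V - {x} - {y} \<and> w \<notin> {a, b}"
    proof (rule ccontr)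
      assume "\<not> ?thesis"
      then have "V \<subseteq> {x, y, a, b}" by auto
      then have "nbrs E a \<subseteq> {x}"
        using nbrs_sub[OF sg, of a] nbrs_noloop[OF sg, of a] False nay
        by (auto simp: nbrs_def insert_commute)
      then have "deg E a \<le> 1" using deg_le1[OF sg] by blast
      then show False using d2 aV by fastforce
    qed
    then obtain w where w: "w \<in> V - {x} - {y}" "w \<notin> {a, b}" by blast
    obtain z where z: "z \<in> V - {x} - {y} - {a, b}" "deg G2 z \<le> 2"
      using KT'[OF sg2 nk2 ab2 w] by blast
    have zL: "z \<in> L" using z dg2 Lfacts by auto
    have zd: "distinct [x, y, z]" using z xne by auto
    have Leq: "L = {x, y, z}" using Lfull[OF fL cL' xL zL zd] .
    have big: "\<And>v. v \<in> V \<Longrightarrow> v \<notin> {x, y, z} \<Longrightarrow> 3 \<le> deg E v"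
    proof -
      fix v assume "v \<in> V" "v \<notin> {x, y, z}"
      then have "v \<notin> L" using Leq by simp
      then have "\<not> deg E v \<le> 2" using \<open>v \<in> V\<close> by (simp add: L_def)
      then show "3 \<le> deg E v" by simp
    qed
    have dz: "deg E z = 2"
    proof -
      have "deg E z \<le> 2" using zL by (simp add: L_def)
      moreover have "2 \<le> deg E z" using d2 z by blast
      ultimately show ?thesis by simp
    qed
    obtain e g where eg: "e \<noteq> g" "nbrs E z = {e, g}" using nbrs2[OF sg dz] by blast
    have ee: "{e, z} \<in> E" "{g, z} \<in> E" using nb_edge[OF eg(2)] by auto
    have xeg: "x \<notin> {e, g}"
    proof
      assume "x \<in> {e, g}"
      then have "z \<in> nbrs E x" using ee by (auto simp: nbrs_def insert_commute)
      then show False using nx z by auto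
    qed
    have yeg: "y \<notin> {e, g}"
    proof
      assume "y \<in> {e, g}"
      then have "z \<in> nbrs E y" using ee by (auto simp: nbrs_def insert_commute)
      then show False using ny z by auto
    qed
    have nbz2: "nbrs G2 z = {e, g}" using nbz[of z] z eg by auto
    define G3 where "G3 = supp G2 z e g"
    note s3 = supp_props[OF sg2 nbz2 eg(1)]
    have sg3: "simple_graph (V - {x} - {y} - {z}) G3" using s3(1) by (simp add: G3_def)
    have nk3: "\<not> has_K4_minor (V - {x} - {y} - {z}) G3" using supp_nk[OF sg2 nk2 nbz2 eg(1)] by (simp add: G3_def)
    have eg3: "{e, g} \<in> G3" by (simp add: G3_def supp_mem)
    have hd3: "\<forall>v\<in>(V - {x} - {y} - {z}) - {e, g}. 3 \<le> deg G3 v"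
    proof
      fix v assume v: "v \<in> (V - {x} - {y} - {z}) - {e, g}"
      then have "deg G3 v = deg G2 v" using s3(10)[of v] by (auto simp: G3_def)
      also have "\<dots> = deg E v" using dg2 v by auto
      finally show "3 \<le> deg G3 v" using big v by auto
    qed
    have V3: "V - {x} - {y} - {z} \<subseteq> {e, g}" using KT[OF sg3 nk3 eg3 hd3] .
    have "a \<in> {e, g}" "b \<in> {e, g}" using V3 aV bV z abne ay bx \<open>a \<noteq> x\<close> \<open>b \<noteq> y\<close> by auto
    have "nbrs E a \<subseteq> {x, z}"
    proof
      fix u assume u: "u \<in> nbrs E a"
      have uV: "u \<in> V" using u nbrs_sub[OF sg] by auto
      have "u \<noteq> a" using u nbrs_noloop[OF sg] by auto
      moreover have "u \<noteq> b" using u False by (auto simp: nbrs_def insert_commute)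
      moreover have "u \<noteq> y" using u nay by (auto simp: nbrs_def insert_commute)
      moreover have "u \<in> {x, y, z} \<or> u \<in> {e, g}" using V3 uV by auto
      ultimately show "u \<in> {x, z}" using \<open>a \<in> {e, g}\<close> \<open>b \<in> {e, g}\<close> abne eg(1) by auto
    qed
    then have "deg E a \<le> 2" using deg_le2[OF sg] by blast
    then have "a \<in> L" using aV by (simp add: L_def)
    then show False using Leq \<open>a \<noteq> x\<close> ay z by auto
  next
    case True
    have dg2: "\<And>v. v \<noteq> x \<Longrightarrow> v \<noteq> y \<Longrightarrow> v \<notin> {a, b} \<Longrightarrow> deg G2 v = deg E v" using deg2 True by simp
    have wit: "\<exists>w. w \<in> V - {x} - {y} \<and> w \<notin> {a, b}"
    proof (rule ccontr)
      assume "\<not> ?thesis"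
      then have Vs: "V \<subseteq> {x, y, a, b}" by auto
      then have "nbrs E a \<subseteq> {x, b}"
        using nbrs_sub[OF sg, of a] nbrs_noloop[OF sg, of a] nay
        by (auto simp: nbrs_def insert_commute)
      then have "deg E a \<le> 2" using deg_le2[OF sg] by blast
      have "nbrs E b \<subseteq> {y, a}"
        using Vs nbrs_sub[OF sg, of b] nbrs_noloop[OF sg, of b] nxb
        by (auto simp: nbrs_def insert_commute)
      then have "deg E b \<le> 2" using deg_le2[OF sg] by blast
      have "{x, y, a, b} \<subseteq> L" using xL aV bV \<open>deg E a \<le> 2\<close> \<open>deg E b \<le> 2\<close> by (auto simp: L_def)
      moreover have "distinct [x, y, a, b]" using xne ay abne \<open>a \<noteq> x\<close> bx \<open>b \<noteq> y\<close> by auto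
      ultimately show False using L4[OF fL cL'] by blast
    qed
    then obtain w where w: "w \<in> V - {x} - {y}" "w \<notin> {a, b}" by blast
    obtain z where z: "z \<in> V - {x} - {y} - {a, b}" "deg G2 z \<le> 2"
      using KT'[OF sg2 nk2 ab2 w] by blast
    have zL: "z \<in> L" using z dg2 Lfacts by auto
    have zd: "distinct [x, y, z]" using z xne by auto
    have Leq: "L = {x, y, z}" using Lfull[OF fL cL' xL zL zd] .
    have big: "\<And>v. v \<in> V \<Longrightarrow> v \<notin> {x, y, z} \<Longrightarrow> 3 \<le> deg E v"
    proof -
      fix v assume "v \<in> V" "v \<notin> {x, y, z}"
      then have "v \<notin> L" using Leq by simp
      then have "\<not> deg E v \<le> 2" using \<open>v \<in> V\<close> by (simp add: L_def)
      then show "3 \<le> deg E v" by simp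
    qed
    have dz: "deg E z = 2"
    proof -
      have "deg E z \<le> 2" using zL by (simp add: L_def)
      moreover have "2 \<le> deg E z" using d2 z by blast
      ultimately show ?thesis by simp
    qed
    obtain e g where eg: "e \<noteq> g" "nbrs E z = {e, g}" using nbrs2[OF sg dz] by blast
    have ee: "{e, z} \<in> E" "{g, z} \<in> E" using nb_edge[OF eg(2)] by auto
    have xeg: "x \<notin> {e, g}"
    proof
      assume "x \<in> {e, g}"
      then have "z \<in> nbrs E x" using ee by (auto simp: nbrs_def insert_commute)
      then show False using nx z by auto
    qed
    have yeg: "y \<notin> {e, g}"
    proof
      assume "y \<in> {e, g}"
      then have "z \<in> nbrs E y" using ee by (auto simp: nbrs_def insert_commute)
      then show False using ny z by auto
    qed
    have nbz2: "nbrs G2 z = {e, g}" using nbz[of z] z eg by auto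
    have egn: "{e, g} \<notin> G2"
    proof
      assume "{e, g} \<in> G2"
      then have "{e, g} = {a, b}" using memG2 xeg yeg tf_nb[OF tf eg(2)] by blast
      then show False using tf_nb[OF tf eg(2)] True by simp
    qed
    define G3 where "G3 = supp G2 z e g"
    note s3 = supp_props[OF sg2 nbz2 eg(1)]
    have sg3: "simple_graph (V - {x} - {y} - {z}) G3" using s3(1) by (simp add: G3_def)
    have nk3: "\<not> has_K4_minor (V - {x} - {y} - {z}) G3" using supp_nk[OF sg2 nk2 nbz2 eg(1)] by (simp add: G3_def)
    have ab3: "{a, b} \<in> G3" using ab2 z by (simp add: G3_def supp_mem)
    have hd3: "\<forall>v\<in>(V - {x} - {y} - {z}) - {a, b}. 3 \<le> deg G3 v"
    proof
      fix v assume v: "v \<in> (V - {x} - {y} - {z}) - {a, b}"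
      then have "deg G3 v = deg G2 v" using s3(10)[of v] egn by (auto simp: G3_def)
      also have "\<dots> = deg E v" using dg2 v by auto
      finally show "3 \<le> deg G3 v" using big v by auto
    qed
    have V3: "V - {x} - {y} - {z} \<subseteq> {a, b}" using KT[OF sg3 nk3 ab3 hd3] .
    have eV: "e \<in> V" "g \<in> V" using sg_edge[OF sg ee(1)] sg_edge[OF sg ee(2)] by auto
    have "e \<noteq> z" "g \<noteq> z" using sg_edge[OF sg ee(1)] sg_edge[OF sg ee(2)] by auto
    then have "e \<in> {a, b}" "g \<in> {a, b}" using V3 eV xeg yeg by auto
    then have "{e, g} = {a, b}" using eg(1) abne by auto
    then show False using tf_nb[OF tf eg(2)] True by simp
  qed
qed



definition good4 :: "'a set \<Rightarrow> 'a set set \<Rightarrow> ('a \<Rightarrow> nat) \<Rightarrow> 'a \<Rightarrow> 'a \<Rightarrow> 'a \<Rightarrow> 'a \<Rightarrow> bool" where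
  "good4 V E f a p b q \<longleftrightarrow> a \<in> V \<and> p \<in> V \<and> b \<in> V \<and> q \<in> V \<and> distinct [a, p, b, q] \<and>
     {a, p} \<in> E \<and> {p, b} \<in> E \<and> {b, q} \<in> E \<and> {q, a} \<in> E \<and>
     deg E a \<le> f a \<and> deg E p \<le> f p \<and> deg E b \<le> f b \<and> deg E q \<le> f q"

lemma choose2:
  assumes "finite V" "x \<in> V" "y \<in> V" "z \<in> V" "distinct [x, y, z]" "card {v\<in>V. f v < (2::nat)} \<le> 1"
  shows "\<exists>u w. u \<in> {x, y, z} \<and> w \<in> {x, y, z} \<and> u \<noteq> w \<and> 2 \<le> f u \<and> 2 \<le> f w"
proof -
  define T where "T = {v\<in>V. f v < 2}"
  have fT: "finite T" using assms(1) by (simp add: T_def)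
  have two: "\<And>a b. a \<in> T \<Longrightarrow> b \<in> T \<Longrightarrow> a \<noteq> b \<Longrightarrow> False"
  proof -
    fix a b assume "a \<in> T" "b \<in> T" "a \<noteq> b"
    then have "card {a, b} \<le> card T" using fT by (intro card_mono) auto
    then show False using assms(6) \<open>a \<noteq> b\<close> by (simp add: T_def)
  qed
  show ?thesis
  proof (cases "2 \<le> f x \<and> 2 \<le> f y")
    case True then show ?thesis using assms(5) by auto
  next
    case False
    then have "x \<in> T \<or> y \<in> T" using assms by (auto simp: T_def)
    show ?thesis
    proof (cases "x \<in> T")
      case True
      then have "y \<notin> T" "z \<notin> T" using two assms(5) by auto
      then have "2 \<le> f y" "2 \<le> f z" using assms(3,4) by (auto simp: T_def)
      then show ?thesis using assms(5) by auto
    next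
      case False
      then have "y \<in> T" using \<open>x \<in> T \<or> y \<in> T\<close> by simp
      then have "z \<notin> T" using two assms(5) by auto
      then have "2 \<le> f x" "2 \<le> f z" using assms(2,4) False by (auto simp: T_def)
      then show ?thesis using assms(5) by auto
    qed
  qed
qed

lemma caseIIb:
  assumes sg: "simple_graph V E" and tf: "triangle_free E" and nk: "\<not> has_K4_minor V E"
    and d2: "\<forall>v\<in>V. 2 \<le> deg E v"
    and indep: "\<forall>u\<in>V. \<forall>v\<in>V. deg E u \<le> 2 \<longrightarrow> deg E v \<le> 2 \<longrightarrow> {u, v} \<notin> E"
    and xV: "x \<in> V" and dx: "deg E x \<le> 2"
    and fd: "\<forall>v\<in>V. f v \<le> deg E v"
    and f2: "card {v\<in>V. f v < 2} \<le> 1" and f3: "card {v\<in>V. f v < 3} \<le> 3"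
  shows "\<exists>a p b q. good4 V E f a p b q"
proof -
  define L where "L = {v\<in>V. deg E v \<le> 2}"
  define S where "S = {v\<in>V. f v < 3}"
  have fV: "finite V" using sg_finite[OF sg] .
  have fL: "finite L" using fV by (simp add: L_def)
  have fS: "finite S" using fV by (simp add: S_def)
  have LS: "L \<subseteq> S" using fd by (force simp: L_def S_def)
  have cL': "card L \<le> 3" using card_mono[OF fS LS] f3 by (simp add: S_def)
  have Lfacts: "\<And>v. v \<in> V \<Longrightarrow> deg E v \<le> 2 \<Longrightarrow> v \<in> L" by (simp add: L_def)
  have notL: "\<And>v. v \<in> V \<Longrightarrow> v \<notin> L \<Longrightarrow> 3 \<le> deg E v" by (simp add: L_def)
  have d2L: "\<And>v. v \<in> L \<Longrightarrow> deg E v = 2"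
  proof -
    fix v assume "v \<in> L"
    then show "deg E v = 2" using d2 by (force simp: L_def)
  qed
  have nbL: "\<And>v u. v \<in> L \<Longrightarrow> u \<in> nbrs E v \<Longrightarrow> u \<notin> L"
  proof -
    fix v u assume "v \<in> L" "u \<in> nbrs E v"
    then have "{u, v} \<in> E" by (simp add: nbrs_def)
    then show "u \<notin> L" using indep \<open>v \<in> L\<close> by (auto simp: L_def)
  qed
  have xL: "x \<in> L" using xV dx by (simp add: L_def)
  obtain a b where ab: "a \<noteq> b" and nx: "nbrs E x = {a, b}" using nbrs2[OF sg d2L[OF xL]] by blast
  have ea: "{a, x} \<in> E" "{b, x} \<in> E" using nb_edge[OF nx] by auto
  have aV: "a \<in> V" "b \<in> V" "a \<noteq> x" "b \<noteq> x" using sg_edge[OF sg ea(1)] sg_edge[OF sg ea(2)] by auto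
  have abL: "a \<notin> L" "b \<notin> L" using nbL[OF xL] nx by auto
  have nab: "{a, b} \<notin> E" using tf_nb[OF tf nx] .
  define G1 where "G1 = supp E x a b"
  note s1 = supp_props[OF sg nx ab]
  have sg1: "simple_graph (V - {x}) G1" using s1(1) by (simp add: G1_def)
  have nk1: "\<not> has_K4_minor (V - {x}) G1" using supp_nk[OF sg nk nx ab] by (simp add: G1_def)
  have deg1: "\<And>v. v \<noteq> x \<Longrightarrow> deg G1 v = deg E v" using s1(10) nab by (simp add: G1_def)
  have ab1: "{a, b} \<in> G1" by (simp add: G1_def supp_mem)
  have wit1: "\<exists>w. w \<in> V - {x} \<and> w \<notin> {a, b}"
  proof (rule ccontr)
    assume "\<not> ?thesis"
    then have "V \<subseteq> {x, a, b}" by auto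
    then have "nbrs E a \<subseteq> {x}"
      using nbrs_sub[OF sg, of a] nbrs_noloop[OF sg, of a] nab
      by (auto simp: nbrs_def insert_commute)
    then have "deg E a \<le> 1" using deg_le1[OF sg] by blast
    then show False using d2 aV by fastforce
  qed
  then obtain w1 where w1: "w1 \<in> V - {x}" "w1 \<notin> {a, b}" by blast
  obtain y where y: "y \<in> V - {x} - {a, b}" "deg G1 y \<le> 2"
    using KT'[OF sg1 nk1 ab1 w1] by blast
  have yL: "y \<in> L" using y deg1 Lfacts by auto
  have xy: "x \<noteq> y" using y by auto
  obtain c d where cd: "c \<noteq> d" and ny: "nbrs E y = {c, d}" using nbrs2[OF sg d2L[OF yL]] by blast
  have ec: "{c, y} \<in> E" "{d, y} \<in> E" using nb_edge[OF ny] by auto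
  have cV: "c \<in> V" "d \<in> V" "c \<noteq> y" "d \<noteq> y" using sg_edge[OF sg ec(1)] sg_edge[OF sg ec(2)] by auto
  have cdL: "c \<notin> L" "d \<notin> L" using nbL[OF yL] ny by auto
  have cdx: "c \<noteq> x" "d \<noteq> x" using cdL xL by auto
  have ncd: "{c, d} \<notin> E" using tf_nb[OF tf ny] .
  have ny1: "nbrs G1 y = {c, d}" using s1(9)[of y] y ny by (auto simp: G1_def)
  have cd1: "{c, d} \<in> G1 \<longleftrightarrow> {c, d} = {a, b}" using ncd by (auto simp: G1_def supp_mem)
  define G2 where "G2 = supp G1 y c d"
  note s2 = supp_props[OF sg1 ny1 cd]
  have sg2: "simple_graph (V - {x} - {y}) G2" using s2(1) by (simp add: G2_def)
  have nk2: "\<not> has_K4_minor (V - {x} - {y}) G2" using supp_nk[OF sg1 nk1 ny1 cd] by (simp add: G2_def)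
  have deg2: "\<And>v. v \<noteq> x \<Longrightarrow> v \<noteq> y \<Longrightarrow> deg G2 v = deg E v - (if (v = c \<or> v = d) \<and> {c, d} = {a, b} then 1 else 0)"
    using s2(10) deg1 cd1 by (simp add: G2_def)
  have ab2: "{a, b} \<in> G2" using ab1 y by (simp add: G2_def supp_mem)
  have nbz: "\<And>z. z \<in> L \<Longrightarrow> z \<noteq> x \<Longrightarrow> z \<noteq> y \<Longrightarrow> nbrs G2 z = nbrs E z"
  proof -
    fix z assume z: "z \<in> L" "z \<noteq> x" "z \<noteq> y"
    have "z \<noteq> a" "z \<noteq> b" "z \<noteq> c" "z \<noteq> d" using z abL cdL by auto
    then have "nbrs G1 z = nbrs E z" using s1(9)[of z] z by (simp add: G1_def)
    then show "nbrs G2 z = nbrs E z" using s2(9)[of z] z \<open>z \<noteq> c\<close> \<open>z \<noteq> d\<close> by (simp add: G2_def)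
  qed
  have memG2: "\<And>e g. {e, g} \<notin> E \<Longrightarrow> ({e, g} \<in> G2 \<longleftrightarrow> {e, g} = {a, b} \<or> {e, g} = {c, d})"
  proof -
    fix e g assume neg: "{e, g} \<notin> E"
    have h1: "{e, g} \<in> G2 \<longleftrightarrow> ({e, g} \<in> G1 \<and> y \<notin> {e, g}) \<or> {e, g} = {c, d}"
      by (simp add: G2_def supp_mem)
    have h2: "{e, g} \<in> G1 \<longleftrightarrow> {e, g} = {a, b}" using neg by (simp add: G1_def supp_mem)
    have h3: "{e, g} = {a, b} \<Longrightarrow> y \<notin> {e, g}" using y by simp
    show "{e, g} \<in> G2 \<longleftrightarrow> {e, g} = {a, b} \<or> {e, g} = {c, d}" using h1 h2 h3 by blast
  qed
  show ?thesis
  proof (cases "{c, d} = {a, b}")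
    case False
    have dg2: "\<And>v. v \<noteq> x \<Longrightarrow> v \<noteq> y \<Longrightarrow> deg G2 v = deg E v" using deg2 False by simp
    have "\<not> (c \<in> {a, b} \<and> d \<in> {a, b})" using False cd ab by auto
    then obtain w where w: "w \<in> V - {x} - {y}" "w \<notin> {a, b}" using cV cdx by auto
    obtain z where z: "z \<in> V - {x} - {y} - {a, b}" "deg G2 z \<le> 2"
      using KT'[OF sg2 nk2 ab2 w] by blast
    have zL: "z \<in> L" using z dg2 Lfacts by auto
    have zd: "distinct [x, y, z]" using z xy by auto
    have Leq: "L = {x, y, z}" using Lfull[OF fL cL' xL yL zL zd] .
    obtain e g where eg: "e \<noteq> g" and nz: "nbrs E z = {e, g}" using nbrs2[OF sg d2L[OF zL]] by blast
    have ee: "{e, z} \<in> E" "{g, z} \<in> E" using nb_edge[OF nz] by auto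
    have eV: "e \<in> V" "g \<in> V" using sg_edge[OF sg ee(1)] sg_edge[OF sg ee(2)] by auto
    have egL: "e \<notin> L" "g \<notin> L" using nbL[OF zL] nz by auto
    have nbz2: "nbrs G2 z = {e, g}" using nbz[OF zL] z nz by auto
    define G3 where "G3 = supp G2 z e g"
    note s3 = supp_props[OF sg2 nbz2 eg]
    have sg3: "simple_graph (V - {x} - {y} - {z}) G3" using s3(1) by (simp add: G3_def)
    have nk3: "\<not> has_K4_minor (V - {x} - {y} - {z}) G3" using supp_nk[OF sg2 nk2 nbz2 eg] by (simp add: G3_def)
    have eg3: "{e, g} \<in> G3" by (simp add: G3_def supp_mem)
    have hd3: "\<forall>v\<in>(V - {x} - {y} - {z}) - {e, g}. 3 \<le> deg G3 v"
    proof
      fix v assume v: "v \<in> (V - {x} - {y} - {z}) - {e, g}"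
      then have "deg G3 v = deg G2 v" using s3(10)[of v] by (auto simp: G3_def)
      also have "\<dots> = deg E v" using dg2 v by auto
      finally show "3 \<le> deg G3 v" using notL v Leq by auto
    qed
    have V3: "V - {x} - {y} - {z} \<subseteq> {e, g}" using KT[OF sg3 nk3 eg3 hd3] .
    have "a \<in> {e, g}" "b \<in> {e, g}" "c \<in> {e, g}" "d \<in> {e, g}"
      using V3 aV cV abL cdL Leq by auto
    then have "{a, b} = {e, g}" "{c, d} = {e, g}" using ab cd eg by auto
    then show ?thesis using False by simp
  next
    case True
    have dg2: "\<And>v. v \<noteq> x \<Longrightarrow> v \<noteq> y \<Longrightarrow> v \<notin> {a, b} \<Longrightarrow> deg G2 v = deg E v"
      using deg2 True by auto
    have wit: "\<exists>w. w \<in> V - {x} - {y} \<and> w \<notin> {a, b}"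
    proof (rule ccontr)
      assume "\<not> ?thesis"
      then have "V \<subseteq> {x, y, a, b}" by auto
      then have "nbrs E a \<subseteq> {x, y}"
        using nbrs_sub[OF sg, of a] nbrs_noloop[OF sg, of a] nab
        by (auto simp: nbrs_def insert_commute)
      then have "deg E a \<le> 2" using deg_le2[OF sg] by blast
      then show False using notL[OF aV(1) abL(1)] by simp
    qed
    then obtain w where w: "w \<in> V - {x} - {y}" "w \<notin> {a, b}" by blast
    obtain z where z: "z \<in> V - {x} - {y} - {a, b}" "deg G2 z \<le> 2"
      using KT'[OF sg2 nk2 ab2 w] by blast
    have zL: "z \<in> L" using z dg2 Lfacts by auto
    have zd: "distinct [x, y, z]" using z xy by auto
    have Leq: "L = {x, y, z}" using Lfull[OF fL cL' xL yL zL zd] .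
    obtain e g where eg: "e \<noteq> g" and nz: "nbrs E z = {e, g}" using nbrs2[OF sg d2L[OF zL]] by blast
    have ee: "{e, z} \<in> E" "{g, z} \<in> E" using nb_edge[OF nz] by auto
    have eV: "e \<in> V" "g \<in> V" using sg_edge[OF sg ee(1)] sg_edge[OF sg ee(2)] by auto
    have egL: "e \<notin> L" "g \<notin> L" using nbL[OF zL] nz by auto
    have nbz2: "nbrs G2 z = {e, g}" using nbz[OF zL] z nz by auto
    have eg2: "{e, g} \<in> G2 \<longleftrightarrow> {e, g} = {a, b}" using memG2 tf_nb[OF tf nz] True by auto
    define G3 where "G3 = supp G2 z e g"
    note s3 = supp_props[OF sg2 nbz2 eg]
    have sg3: "simple_graph (V - {x} - {y} - {z}) G3" using s3(1) by (simp add: G3_def)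
    have nk3: "\<not> has_K4_minor (V - {x} - {y} - {z}) G3" using supp_nk[OF sg2 nk2 nbz2 eg] by (simp add: G3_def)
    have ab3: "{a, b} \<in> G3" using ab2 z by (simp add: G3_def supp_mem)
    have hd3: "\<forall>v\<in>(V - {x} - {y} - {z}) - {a, b}. 3 \<le> deg G3 v"
    proof
      fix v assume v: "v \<in> (V - {x} - {y} - {z}) - {a, b}"
      have "deg G3 v = deg G2 v"
      proof (cases "{e, g} = {a, b}")
        case True then show ?thesis using s3(10)[of v] v by (auto simp: G3_def)
      next
        case False then show ?thesis using s3(10)[of v] v eg2 by (auto simp: G3_def)
      qed
      also have "\<dots> = deg E v" using dg2 v by auto
      finally show "3 \<le> deg G3 v" using notL v Leq by auto
    qed
    have V3: "V - {x} - {y} - {z} \<subseteq> {a, b}" using KT[OF sg3 nk3 ab3 hd3] .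
    have "e \<in> {a, b}" "g \<in> {a, b}" using V3 eV egL Leq by auto
    then have egab: "{e, g} = {a, b}" using ab eg by auto
    have Vsub: "V \<subseteq> {x, y, z, a, b}" using V3 by auto
    have dab: "deg E a \<le> 3" "deg E b \<le> 3"
    proof -
      have "nbrs E a \<subseteq> {x, y, z}"
        using Vsub nbrs_sub[OF sg, of a] nbrs_noloop[OF sg, of a] nab
        by (auto simp: nbrs_def insert_commute)
      then have "deg E a \<le> card {x, y, z}" using deg_le_sub[OF sg] by blast
      then show "deg E a \<le> 3" using zd by simp
      have "nbrs E b \<subseteq> {x, y, z}"
        using Vsub nbrs_sub[OF sg, of b] nbrs_noloop[OF sg, of b] nab
        by (auto simp: nbrs_def)
      then have "deg E b \<le> card {x, y, z}" using deg_le_sub[OF sg] by blast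
      then show "deg E b \<le> 3" using zd by simp
    qed
    have SL: "S = L"
    proof -
      have cL3: "card L = 3" using Leq zd by simp
      have cS: "card S \<le> 3" using f3 by (simp only: S_def)
      have "card L \<le> card S" using card_mono[OF fS LS] .
      then have "card L = card S" using cL3 cS by simp
      then show ?thesis using card_subset_eq[OF fS LS] by simp
    qed
    have fab: "3 \<le> f a" "3 \<le> f b" using SL abL aV by (auto simp: S_def)
    have nbs: "\<And>u. u \<in> {x, y, z} \<Longrightarrow> nbrs E u = {a, b}" using nx ny nz True egab by auto
    obtain u w where uw: "u \<in> {x, y, z}" "w \<in> {x, y, z}" "u \<noteq> w" "2 \<le> f u" "2 \<le> f w"
      using choose2[OF fV xV _ _ zd f2] y z by auto
    have uL: "u \<in> L" "w \<in> L" using uw Leq by auto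
    have eu: "{a, u} \<in> E" "{u, b} \<in> E" "{b, w} \<in> E" "{w, a} \<in> E"
      using nb_edge[OF nbs[OF uw(1)]] nb_edge[OF nbs[OF uw(2)]] by auto
    have uV: "u \<in> V" "w \<in> V" using uL by (auto simp: L_def)
    have "a \<noteq> u" "a \<noteq> w" "b \<noteq> u" "b \<noteq> w" using uL abL by auto
    then have dist: "distinct [a, u, b, w]" using ab uw(3) by auto
    have "good4 V E f a u b w"
      unfolding good4_def using aV uV dist eu dab fab uw d2L[OF uL(1)] d2L[OF uL(2)] by auto
    then show ?thesis by blast
  qed
qed



lemma del_sg: "simple_graph V E \<Longrightarrow> simple_graph (V - X) {e\<in>E. e \<inter> X = {}}"
  unfolding simple_graph_def by fastforce

lemma del_nbrs: "v \<notin> X \<Longrightarrow> nbrs {e\<in>E. e \<inter> X = {}} v = nbrs E v - X"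
  unfolding nbrs_def by auto

lemma del_nk: "\<not> has_K4_minor V E \<Longrightarrow> \<not> has_K4_minor (V - X) {e\<in>E. e \<inter> X = {}}"
  using K4_mono[of "V - X" "{e\<in>E. e \<inter> X = {}}" V E] by blast

lemma del_tf: "triangle_free E \<Longrightarrow> triangle_free {e\<in>E. e \<inter> X = {}}"
  unfolding triangle_free_def by blast

lemma core:
  assumes sg: "simple_graph V E" and tf: "triangle_free E" and nk: "\<not> has_K4_minor V E"
    and f1: "\<forall>v\<in>V. 1 \<le> f v" and f2: "card {v\<in>V. f v < 2} \<le> 1" and f3: "card {v\<in>V. f v < 3} \<le> 3"
    and fd: "\<forall>v\<in>V. f v \<le> deg E v" and ne: "V \<noteq> {}"
  shows "\<exists>a p b q. good4 V E f a p b q"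
  using assms
proof (induction "card V" arbitrary: V E f rule: less_induct)
  case less
  note sg = less.prems(1) and tf = less.prems(2) and nk = less.prems(3) and f1 = less.prems(4)
    and f2 = less.prems(5) and f3 = less.prems(6) and fd = less.prems(7) and ne = less.prems(8)
  have fV: "finite V" using sg_finite[OF sg] .
  show ?case
  proof (cases "\<exists>z\<in>V. deg E z = 1")
    case True
    then obtain z where zV: "z \<in> V" and dz: "deg E z = 1" by blast
    have "card (nbrs E z) = Suc 0" using dz by (simp add: deg_def)
    then obtain w where nz: "nbrs E z = {w}" using card_1_singleton_iff[of "nbrs E z"] by blast
    have ezw: "{w, z} \<in> E" using nz by (auto simp: nbrs_def)
    have wV: "w \<in> V" "w \<noteq> z" using sg_edge[OF sg ezw] by auto
    have fz: "f z = 1" using f1 fd zV dz by force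
    define T where "T = {v\<in>V. f v < 2}"
    have fT: "finite T" using fV by (simp add: T_def)
    have zT: "z \<in> T" using zV fz by (simp add: T_def)
    have Tz: "\<And>v. v \<in> T \<Longrightarrow> v = z"
    proof (rule ccontr)
      fix v assume "v \<in> T" "v \<noteq> z"
      then have "card {v, z} \<le> card T" using fT zT by (intro card_mono) auto
      then show False using f2 \<open>v \<noteq> z\<close> by (simp add: T_def)
    qed
    have fw: "2 \<le> f w" using Tz[of w] wV by (force simp: T_def)
    define V' where "V' = V - {z}"
    define E' where "E' = {e\<in>E. e \<inter> {z} = {}}"
    define f' where "f' = f(w := f w - 1)"
    have sg': "simple_graph V' E'" unfolding V'_def E'_def by (rule del_sg[OF sg])
    have tf': "triangle_free E'" unfolding E'_def by (rule del_tf[OF tf])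
    have nk': "\<not> has_K4_minor V' E'" unfolding V'_def E'_def by (rule del_nk[OF nk])
    have f1': "\<forall>v\<in>V'. 1 \<le> f' v" using f1 fw by (auto simp: f'_def V'_def)
    have f2': "card {v\<in>V'. f' v < 2} \<le> 1"
    proof -
      have "{v\<in>V'. f' v < 2} \<subseteq> {w}"
      proof
        fix v assume v: "v \<in> {v\<in>V'. f' v < 2}"
        show "v \<in> {w}"
        proof (rule ccontr)
          assume "v \<notin> {w}"
          then have "v \<in> T" "v \<noteq> z" using v by (auto simp: f'_def V'_def T_def)
          then show False using Tz by blast
        qed
      qed
      then have "card {v\<in>V'. f' v < 2} \<le> card {w}" by (intro card_mono) auto
      then show ?thesis by simp
    qed
    have f3': "card {v\<in>V'. f' v < 3} \<le> 3"
    proof -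
      define S where "S = {v\<in>V. f v < 3}"
      have fS: "finite S" using fV by (simp add: S_def)
      have zS: "z \<in> S" using zV fz by (simp add: S_def)
      have sub: "{v\<in>V'. f' v < 3} \<subseteq> insert w (S - {z})"
        by (auto simp: f'_def V'_def S_def)
      have fin: "finite (insert w (S - {z}))" using fS by simp
      have "card {v\<in>V'. f' v < 3} \<le> card (insert w (S - {z}))" using card_mono[OF fin sub] .
      also have "\<dots> \<le> Suc (card (S - {z}))" using fS by (simp add: card_insert_if)
      also have "\<dots> = card S" using card_Suc_Diff1[OF fS zS] .
      also have "\<dots> \<le> 3" using f3 by (simp add: S_def)
      finally show ?thesis .
    qed
    have degE': "\<And>v. v \<in> V' \<Longrightarrow> deg E' v = deg E v - (if v = w then 1 else 0)"
    proof -
      fix v assume vV: "v \<in> V'"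
      then have nb: "nbrs E' v = nbrs E v - {z}" using del_nbrs[of v "{z}" E] by (simp add: E'_def V'_def)
      have zin: "z \<in> nbrs E v \<longleftrightarrow> v = w" using nz by (auto simp: nbrs_def insert_commute)
      show "deg E' v = deg E v - (if v = w then 1 else 0)"
      proof (cases "v = w")
        case True
        then have "z \<in> nbrs E v" using zin by simp
        then show ?thesis using nb nbrs_finite[OF sg, of v] True by (simp add: deg_def card_Diff_singleton)
      next
        case False
        then have "z \<notin> nbrs E v" using zin by simp
        then have "nbrs E' v = nbrs E v" using nb by auto
        then show ?thesis using False by (simp add: deg_def)
      qed
    qed
    have fd': "\<forall>v\<in>V'. f' v \<le> deg E' v"
    proof
      fix v assume v: "v \<in> V'"
      then have vV: "v \<in> V" by (simp add: V'_def)
      show "f' v \<le> deg E' v" using degE'[OF v] fd vV by (auto simp: f'_def)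
    qed
    have ne': "V' \<noteq> {}" using wV by (auto simp: V'_def)
    have lt: "card V' < card V" unfolding V'_def using card_Diff1_less[OF fV zV] .
    obtain a p b q where g: "good4 V' E' f' a p b q"
      using less.hyps[OF lt sg' tf' nk' f1' f2' f3' fd' ne'] by blast
    have lift: "\<And>c. c \<in> V' \<Longrightarrow> deg E' c \<le> f' c \<Longrightarrow> deg E c \<le> f c"
    proof -
      fix c assume "c \<in> V'" "deg E' c \<le> f' c"
      then show "deg E c \<le> f c" using degE'[of c] fw fd \<open>c \<in> V'\<close>
        by (auto simp: f'_def V'_def split: if_splits)
    qed
    have "good4 V E f a p b q"
      using g lift unfolding good4_def by (auto simp: V'_def E'_def)
    then show ?thesis by blast
  next
    case False
    have d2: "\<forall>v\<in>V. 2 \<le> deg E v"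
    proof
      fix v assume v: "v \<in> V"
      then have "1 \<le> deg E v" using f1 fd by force
      moreover have "deg E v \<noteq> 1" using False v by blast
      ultimately show "2 \<le> deg E v" by simp
    qed
    define L where "L = {v\<in>V. deg E v \<le> 2}"
    define S where "S = {v\<in>V. f v < 3}"
    have fS: "finite S" using fV by (simp add: S_def)
    have LS: "L \<subseteq> S" using fd by (force simp: L_def S_def)
    have cL: "card {v\<in>V. deg E v \<le> 2} \<le> 3" using card_mono[OF fS LS] f3 by (simp add: S_def L_def)
    obtain v where vV: "v \<in> V" using ne by blast
    have "nbrs E v \<noteq> {}" using d2 vV unfolding deg_def by force
    then obtain u where "u \<in> nbrs E v" by blast
    then have evu: "{v, u} \<in> E" by (simp add: nbrs_def insert_commute)
    have wit: "\<exists>w. w \<in> V \<and> w \<notin> {v, u}"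
    proof (rule ccontr)
      assume "\<not> ?thesis"
      then have "V \<subseteq> {v, u}" by auto
      then have "nbrs E v \<subseteq> {u}" using nbrs_sub[OF sg, of v] nbrs_noloop[OF sg, of v] by auto
      then have "deg E v \<le> 1" using deg_le1[OF sg] by blast
      then show False using d2 vV by fastforce
    qed
    then obtain w where "w \<in> V" "w \<notin> {v, u}" by blast
    then obtain x where x: "x \<in> V" "deg E x \<le> 2" using KT'[OF sg nk evu] by blast
    show ?thesis
    proof (cases "\<exists>a\<in>V. \<exists>b\<in>V. deg E a \<le> 2 \<and> deg E b \<le> 2 \<and> {a, b} \<in> E")
      case True
      then obtain a b where ab: "a \<in> V" "b \<in> V" "deg E a \<le> 2" "deg E b \<le> 2" "{a, b} \<in> E" by blast
      have "deg E a = 2" "deg E b = 2" using ab d2 by force+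
      then show ?thesis using caseIIa[OF sg tf nk d2 cL ab(1,2,5)] by blast
    next
      case False
      then have indep: "\<forall>u\<in>V. \<forall>v\<in>V. deg E u \<le> 2 \<longrightarrow> deg E v \<le> 2 \<longrightarrow> {u, v} \<notin> E" by blast
      show ?thesis using caseIIb[OF sg tf nk d2 indep x fd f2 f3] .
    qed
  qed
qed



lemma or_arc: "orientation E D \<Longrightarrow> (u, w) \<in> D \<Longrightarrow> {u, w} \<in> E"
  unfolding orientation_def by auto

lemma or_fin:
  assumes "simple_graph V E" "orientation E D" shows "D \<subseteq> V \<times> V" "finite D"
proof -
  show sub: "D \<subseteq> V \<times> V" using assms or_arc sg_edge by fastforce
  show "finite D" using finite_subset[OF sub] sg_finite[OF assms(1)] by blast
qed

lemma diff_cong: "eulerian_subdigraphs V D = eulerian_subdigraphs V' D' \<Longrightarrow> diff V D = diff V' D'"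
  unfolding diff_def by simp

lemma source_step:
  assumes sg: "simple_graph V E" and vV: "v \<in> V"
    and or': "orientation {e\<in>E. e \<inter> {v} = {}} D'" and df: "diff (V - {v}) D' \<noteq> 0"
    and od': "\<forall>u\<in>V - {v}. outdeg D' u \<le> f u - 1"
    and dv: "deg E v \<le> f v - 1"
  shows "f_AT V E f"
proof -
  define E' where "E' = {e\<in>E. e \<inter> {v} = {}}"
  have sg': "simple_graph (V - {v}) E'" using sg unfolding simple_graph_def E'_def by fastforce
  have or'': "orientation E' D'" using or' by (simp add: E'_def)
  have arc': "\<And>x y. (x, y) \<in> D' \<Longrightarrow> {x, y} \<in> E \<and> x \<noteq> v \<and> y \<noteq> v"
    using or_arc[OF or''] by (auto simp: E'_def)
  have fD': "finite D'" using or_fin[OF sg' or''] by simp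
  define D where "D = D' \<union> {(v, u) | u. {v, u} \<in> E}"
  have orD: "orientation E D"
    unfolding orientation_def
  proof (intro conjI allI impI)
    show "\<forall>(x, y)\<in>D. {x, y} \<in> E" using arc' by (auto simp: D_def)
  next
    fix x y assume e: "{x, y} \<in> E"
    have xy: "x \<noteq> y" using sg_edge[OF sg e] by simp
    show "(x, y) \<in> D \<longleftrightarrow> (y, x) \<notin> D"
    proof (cases "x = v \<or> y = v")
      case True
      then show ?thesis using e xy arc' by (auto simp: D_def insert_commute)
    next
      case False
      then have "{x, y} \<in> E'" using e by (auto simp: E'_def)
      then have "(x, y) \<in> D' \<longleftrightarrow> (y, x) \<notin> D'" using or'' unfolding orientation_def by blast
      then show ?thesis using False by (auto simp: D_def)
    qed
  qed
  have eul: "eulerian_subdigraphs V D = eulerian_subdigraphs (V - {v}) D'"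
  proof
    show "eulerian_subdigraphs V D \<subseteq> eulerian_subdigraphs (V - {v}) D'"
    proof
      fix F assume "F \<in> eulerian_subdigraphs V D"
      then have FD: "F \<subseteq> D" and Fe: "\<forall>u\<in>V. outdeg F u = indeg F u"
        by (auto simp: eulerian_subdigraphs_def)
      have "{w. (w, v) \<in> F} = {}"
      proof (rule ccontr)
        assume "{w. (w, v) \<in> F} \<noteq> {}"
        then obtain x where "(x, v) \<in> F" by blast
        then have "(x, v) \<in> D" using FD by blast
        then have "(x, v) \<in> D' \<or> (x = v \<and> {v, v} \<in> E)" by (auto simp: D_def)
        then show False using arc' sg_edge[OF sg, of v v] by blast
      qed
      then have "outdeg F v = 0" using Fe vV by (simp add: indeg_def)
      moreover have "finite {w. (v, w) \<in> F}"
      proof -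
        have "{w. (v, w) \<in> F} \<subseteq> V"
        proof
          fix x assume "x \<in> {w. (v, w) \<in> F}"
          then have "(v, x) \<in> D" using FD by blast
          then have "{v, x} \<in> E" using arc' by (auto simp: D_def)
          then show "x \<in> V" using sg_edge[OF sg] by blast
        qed
        then show ?thesis using sg_finite[OF sg] finite_subset by blast
      qed
      ultimately have "{w. (v, w) \<in> F} = {}" by (simp add: outdeg_def)
      then have "F \<subseteq> D'" using FD by (auto simp: D_def)
      then show "F \<in> eulerian_subdigraphs (V - {v}) D'" using Fe by (auto simp: eulerian_subdigraphs_def)
    qed
  next
    show "eulerian_subdigraphs (V - {v}) D' \<subseteq> eulerian_subdigraphs V D"
    proof
      fix F assume "F \<in> eulerian_subdigraphs (V - {v}) D'"
      then have FD: "F \<subseteq> D'" and Fe: "\<forall>u\<in>V - {v}. outdeg F u = indeg F u"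
        by (auto simp: eulerian_subdigraphs_def)
      have "{w. (v, w) \<in> F} = {}" "{w. (w, v) \<in> F} = {}" using FD arc' by auto
      then have "outdeg F v = indeg F v" by (simp add: outdeg_def indeg_def)
      then have "\<forall>u\<in>V. outdeg F u = indeg F u" using Fe by blast
      then show "F \<in> eulerian_subdigraphs V D" using FD by (auto simp: eulerian_subdigraphs_def D_def)
    qed
  qed
  have "diff V D \<noteq> 0" using diff_cong[OF eul] df by simp
  moreover have "\<forall>u\<in>V. outdeg D u \<le> f u - 1"
  proof
    fix u assume uV: "u \<in> V"
    show "outdeg D u \<le> f u - 1"
    proof (cases "u = v")
      case True
      have "{w. (v, w) \<in> D} = nbrs E v" using arc' by (auto simp: D_def nbrs_def insert_commute)
      then show ?thesis using True dv by (simp add: outdeg_def deg_def)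
    next
      case False
      then have "{w. (u, w) \<in> D} = {w. (u, w) \<in> D'}" by (auto simp: D_def)
      then show ?thesis using od' uV False by (simp add: outdeg_def)
    qed
  qed
  ultimately show ?thesis unfolding f_AT_def AT_orientation_def using orD by blast
qed



lemma card_split_dis:
  assumes "finite A" "A = B \<union> C" "B \<inter> C = {}"
  shows "card A = card B + card C"
  using assms card_Un_disjoint finite_Un by metis

lemma diff_double:
  assumes fD: "finite D'" and dis: "Cy \<inter> D' = {}" and fC: "finite Cy" and cC: "card Cy = 4"
    and Cne: "Cy \<noteq> {}"
    and eq: "X = Y \<union> (\<lambda>F. F \<union> Cy) ` Y" and YD: "\<forall>F\<in>Y. F \<subseteq> D'"
  shows "card {F\<in>X. even (card F)} = 2 * card {F\<in>Y. even (card F)}"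
    and "card {F\<in>X. odd (card F)} = 2 * card {F\<in>Y. odd (card F)}"
proof -
  have fY: "finite Y"
  proof -
    have "Y \<subseteq> Pow D'" using YD by auto
    then show ?thesis using fD finite_subset by blast
  qed
  have cardU: "\<And>F. F \<in> Y \<Longrightarrow> card (F \<union> Cy) = card F + 4"
  proof -
    fix F assume "F \<in> Y"
    then have "F \<subseteq> D'" using YD by blast
    then have "finite F" "F \<inter> Cy = {}" using fD dis finite_subset by blast+
    then show "card (F \<union> Cy) = card F + 4" using card_Un_disjoint[OF _ fC] cC by simp
  qed
  have inj: "inj_on (\<lambda>F. F \<union> Cy) Y"
  proof
    fix F G assume FG: "F \<in> Y" "G \<in> Y" "F \<union> Cy = G \<union> Cy"
    have "F \<inter> Cy = {}" "G \<inter> Cy = {}" using FG(1,2) YD dis by blast+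
    then show "F = G" using FG(3) by blast
  qed
  have disj: "\<And>P. {F\<in>Y. P F} \<inter> (\<lambda>F. F \<union> Cy) ` {F\<in>Y. P F} = {}"
  proof -
    fix P
    obtain c where c: "c \<in> Cy" using Cne by blast
    have "\<And>F. F \<in> Y \<Longrightarrow> c \<notin> F" using YD dis c by blast
    then show "{F\<in>Y. P F} \<inter> (\<lambda>F. F \<union> Cy) ` {F\<in>Y. P F} = {}" using c by blast
  qed
  have gen: "\<And>P. (\<And>F. F \<in> Y \<Longrightarrow> P (card (F \<union> Cy)) = P (card F)) \<Longrightarrow>
     card {F\<in>X. P (card F)} = 2 * card {F\<in>Y. P (card F)}"
  proof -
    fix P :: "nat \<Rightarrow> bool"
    assume h: "\<And>F. F \<in> Y \<Longrightarrow> P (card (F \<union> Cy)) = P (card F)"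
    define A where "A = {F\<in>Y. P (card F)}"
    define g where "g = (\<lambda>F. F \<union> Cy)"
    have s1: "{F\<in>X. P (card F)} = A \<union> {G\<in>g ` Y. P (card G)}"
      unfolding eq A_def g_def by blast
    have s2: "{G\<in>g ` Y. P (card G)} = g ` A"
    proof
      show "{G\<in>g ` Y. P (card G)} \<subseteq> g ` A"
      proof
        fix G assume "G \<in> {G\<in>g ` Y. P (card G)}"
        then obtain F where F: "F \<in> Y" "G = g F" "P (card (g F))" by blast
        then have "P (card F)" using h[OF F(1)] by (simp add: g_def)
        then show "G \<in> g ` A" using F by (auto simp: A_def)
      qed
    next
      show "g ` A \<subseteq> {G\<in>g ` Y. P (card G)}"
      proof
        fix G assume "G \<in> g ` A"
        then obtain F where F: "F \<in> Y" "G = g F" "P (card F)" by (auto simp: A_def)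
        then have "P (card (g F))" using h[OF F(1)] by (simp add: g_def)
        then show "G \<in> {G\<in>g ` Y. P (card G)}" using F by blast
      qed
    qed
    have fA: "finite A" using fY by (simp add: A_def)
    have cA: "card (g ` A) = card A"
    proof (rule card_image)
      have "A \<subseteq> Y" by (auto simp: A_def)
      then show "inj_on g A" using inj_on_subset[OF inj] by (simp add: g_def)
    qed
    have dA: "A \<inter> g ` A = {}" using disj[of "\<lambda>F. P (card F)"] by (simp add: A_def g_def)
    have "card (A \<union> g ` A) = card A + card (g ` A)"
      by (rule card_Un_disjoint) (use fA dA in auto)
    then show "card {F\<in>X. P (card F)} = 2 * card {F\<in>Y. P (card F)}"
      using s1 s2 cA by (simp add: A_def)
  qed
  show "card {F\<in>X. even (card F)} = 2 * card {F\<in>Y. even (card F)}"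
    by (rule gen) (simp add: cardU)
  show "card {F\<in>X. odd (card F)} = 2 * card {F\<in>Y. odd (card F)}"
    by (rule gen) (simp add: cardU)
qed



lemma cycle_step:
  assumes sg: "simple_graph V E" and tf: "triangle_free E"
    and vs: "a \<in> V" "p \<in> V" "b \<in> V" "q \<in> V" and dist: "distinct [a, p, b, q]"
    and es: "{a, p} \<in> E" "{p, b} \<in> E" "{b, q} \<in> E" "{q, a} \<in> E"
    and Cdef: "C = {a, p, b, q}"
    and or': "orientation {e\<in>E. e \<inter> C = {}} D'" and df: "diff (V - C) D' \<noteq> 0"
    and od': "\<forall>u\<in>V - C. outdeg D' u \<le> f u - 1"
    and dg: "deg E a \<le> f a" "deg E p \<le> f p" "deg E b \<le> f b" "deg E q \<le> f q"
  shows "f_AT V E f"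
proof -
  define E' where "E' = {e\<in>E. e \<inter> C = {}}"
  have sg': "simple_graph (V - C) E'" using sg unfolding simple_graph_def E'_def by fastforce
  have or'': "orientation E' D'" using or' by (simp add: E'_def)
  have arc': "\<And>x y. (x, y) \<in> D' \<Longrightarrow> {x, y} \<in> E \<and> x \<notin> C \<and> y \<notin> C"
    using or_arc[OF or''] by (auto simp: E'_def)
  have fD': "finite D'" using or_fin[OF sg' or''] by simp
  have nab: "{a, b} \<notin> E" using tf_tri[OF tf es(1) es(2)] by blast
  have npq: "{p, q} \<notin> E" using tf_tri[OF tf es(2) es(3)] by blast
  define Cy where "Cy = {(a, p), (p, b), (b, q), (q, a)}"
  define Out where "Out = {(c, u). c \<in> C \<and> u \<notin> C \<and> {c, u} \<in> E}"
  define D where "D = D' \<union> Cy \<union> Out"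
  have dd: "a \<noteq> p" "a \<noteq> b" "a \<noteq> q" "p \<noteq> b" "p \<noteq> q" "b \<noteq> q" using dist by auto
  have inC: "a \<in> C" "p \<in> C" "b \<in> C" "q \<in> C" by (auto simp: Cdef)
  have CyE: "\<And>x y. (x, y) \<in> Cy \<Longrightarrow> {x, y} \<in> E" using es by (auto simp: Cy_def)
  have orD: "orientation E D"
    unfolding orientation_def
  proof (intro conjI allI impI)
    show "\<forall>(x, y)\<in>D. {x, y} \<in> E" using arc' CyE by (auto simp: D_def Out_def)
  next
    fix x y assume e: "{x, y} \<in> E"
    have xy: "x \<noteq> y" using sg_edge[OF sg e] by simp
    show "(x, y) \<in> D \<longleftrightarrow> (y, x) \<notin> D"
    proof (cases "x \<in> C")
      case xC: True
      show ?thesis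
      proof (cases "y \<in> C")
        case yC: True
        have "(x, y) \<notin> D'" "(y, x) \<notin> D'" "(x, y) \<notin> Out" "(y, x) \<notin> Out"
          using arc' xC yC by (auto simp: Out_def)
        moreover have "(x, y) \<in> Cy \<longleftrightarrow> (y, x) \<notin> Cy"
          using xC yC xy e nab npq dd unfolding Cdef Cy_def
          by (auto simp: insert_commute)
        ultimately show ?thesis by (auto simp: D_def)
      next
        case yC: False
        have "(x, y) \<in> Out" using xC yC e by (simp add: Out_def)
        moreover have "(y, x) \<notin> D" using arc' xC yC by (auto simp: D_def Out_def Cy_def Cdef)
        ultimately show ?thesis by (simp add: D_def)
      qed
    next
      case xC: False
      show ?thesis
      proof (cases "y \<in> C")
        case yC: True
        have "(y, x) \<in> Out" using xC yC e by (simp add: Out_def insert_commute)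
        moreover have "(x, y) \<notin> D" using arc' xC yC by (auto simp: D_def Out_def Cy_def Cdef)
        ultimately show ?thesis by (simp add: D_def)
      next
        case yC: False
        have "{x, y} \<in> E'" using e xC yC by (auto simp: E'_def)
        then have "(x, y) \<in> D' \<longleftrightarrow> (y, x) \<notin> D'" using or'' unfolding orientation_def by blast
        moreover have "(x, y) \<notin> Cy \<union> Out" "(y, x) \<notin> Cy \<union> Out" using xC yC inC by (auto simp: Cy_def Out_def)
        ultimately show ?thesis by (auto simp: D_def)
      qed
    qed
  qed
  have fD: "finite D"
  proof -
    have "D \<subseteq> V \<times> V" using orD or_fin(1)[OF sg] by blast
    then show ?thesis using sg_finite[OF sg] finite_subset by blast
  qed
  have inD: "\<And>c r. c \<in> C \<Longrightarrow> (r, c) \<in> Cy \<Longrightarrow> (\<forall>w. (w, c) \<in> Cy \<longrightarrow> w = r) \<Longrightarrow>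
      (\<forall>w. (w, c) \<in> D \<longrightarrow> w = r)"
  proof -
    fix c r assume cC: "c \<in> C" and h: "\<forall>w. (w, c) \<in> Cy \<longrightarrow> w = r"
    show "\<forall>w. (w, c) \<in> D \<longrightarrow> w = r"
    proof (intro allI impI)
      fix w assume "(w, c) \<in> D"
      then have "(w, c) \<in> D' \<or> (w, c) \<in> Cy \<or> (w, c) \<in> Out" by (simp add: D_def)
      moreover have "(w, c) \<notin> D'" using arc' cC by blast
      moreover have "(w, c) \<notin> Out" using cC by (simp add: Out_def)
      ultimately show "w = r" using h by blast
    qed
  qed
  have outD: "\<And>c n. c \<in> C \<Longrightarrow> (\<forall>w. (c, w) \<in> Cy \<longrightarrow> w = n) \<Longrightarrow>
      (\<forall>w. (c, w) \<in> D \<and> w \<in> C \<longrightarrow> w = n)"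
  proof -
    fix c n assume cC: "c \<in> C" and h: "\<forall>w. (c, w) \<in> Cy \<longrightarrow> w = n"
    show "\<forall>w. (c, w) \<in> D \<and> w \<in> C \<longrightarrow> w = n"
    proof (intro allI impI)
      fix w assume w: "(c, w) \<in> D \<and> w \<in> C"
      then have "(c, w) \<in> D' \<or> (c, w) \<in> Cy \<or> (c, w) \<in> Out" by (simp add: D_def)
      moreover have "(c, w) \<notin> D'" using arc' cC by blast
      moreover have "(c, w) \<notin> Out" using w by (simp add: Out_def)
      ultimately show "w = n" using h by blast
    qed
  qed
  have ina: "\<forall>w. (w, a) \<in> D \<longrightarrow> w = q" by (rule inD) (use inC dd in \<open>auto simp: Cy_def\<close>)
  have inp: "\<forall>w. (w, p) \<in> D \<longrightarrow> w = a" by (rule inD) (use inC dd in \<open>auto simp: Cy_def\<close>)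
  have inb: "\<forall>w. (w, b) \<in> D \<longrightarrow> w = p" by (rule inD) (use inC dd in \<open>auto simp: Cy_def\<close>)
  have inq: "\<forall>w. (w, q) \<in> D \<longrightarrow> w = b" by (rule inD) (use inC dd in \<open>auto simp: Cy_def\<close>)
  have outa: "\<forall>w. (a, w) \<in> D \<and> w \<in> C \<longrightarrow> w = p" by (rule outD) (use inC dd in \<open>auto simp: Cy_def\<close>)
  have outp: "\<forall>w. (p, w) \<in> D \<and> w \<in> C \<longrightarrow> w = b" by (rule outD) (use inC dd in \<open>auto simp: Cy_def\<close>)
  have outb: "\<forall>w. (b, w) \<in> D \<and> w \<in> C \<longrightarrow> w = q" by (rule outD) (use inC dd in \<open>auto simp: Cy_def\<close>)
  have outq: "\<forall>w. (q, w) \<in> D \<and> w \<in> C \<longrightarrow> w = a" by (rule outD) (use inC dd in \<open>auto simp: Cy_def\<close>)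
  have indegF: "\<And>F c r. F \<subseteq> D \<Longrightarrow> (\<forall>w. (w, c) \<in> D \<longrightarrow> w = r) \<Longrightarrow>
      indeg F c = (if (r, c) \<in> F then 1 else 0)"
  proof -
    fix F c r assume FD: "F \<subseteq> D" and h: "\<forall>w. (w, c) \<in> D \<longrightarrow> w = r"
    have "{w. (w, c) \<in> F} = (if (r, c) \<in> F then {r} else {})" using FD h by auto
    then show "indeg F c = (if (r, c) \<in> F then 1 else 0)" by (simp add: indeg_def)
  qed
  have outdegF: "\<And>F c n. F \<subseteq> D \<Longrightarrow> n \<in> C \<Longrightarrow> (\<forall>w. (c, w) \<in> D \<and> w \<in> C \<longrightarrow> w = n) \<Longrightarrow>
      outdeg F c = (if (c, n) \<in> F then 1 else 0) + card {w. w \<notin> C \<and> (c, w) \<in> F}"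
  proof -
    fix F c n assume FD: "F \<subseteq> D" and nC: "n \<in> C" and h: "\<forall>w. (c, w) \<in> D \<and> w \<in> C \<longrightarrow> w = n"
    have fF: "finite F" using FD fD finite_subset by blast
    have fin: "finite {w. w \<notin> C \<and> (c, w) \<in> F}"
    proof -
      have "{w. w \<notin> C \<and> (c, w) \<in> F} \<subseteq> snd ` F" by force
      then show ?thesis using fF finite_subset by blast
    qed
    have eq: "{w. (c, w) \<in> F} = (if (c, n) \<in> F then {n} else {}) \<union> {w. w \<notin> C \<and> (c, w) \<in> F}"
      using FD h by auto
    have dj: "(if (c, n) \<in> F then {n} else {}) \<inter> {w. w \<notin> C \<and> (c, w) \<in> F} = {}" using nC by auto
    show "outdeg F c = (if (c, n) \<in> F then 1 else 0) + card {w. w \<notin> C \<and> (c, w) \<in> F}"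
      unfolding outdeg_def eq using card_Un_disjoint[OF _ fin dj] by simp
  qed
  have fin_o: "\<And>F c. F \<subseteq> D \<Longrightarrow> finite {w. w \<notin> C \<and> (c, w) \<in> F}"
  proof -
    fix F c assume "F \<subseteq> D"
    then have fF: "finite F" using fD finite_subset by blast
    have "{w. w \<notin> C \<and> (c, w) \<in> F} \<subseteq> snd ` F" by force
    then show "finite {w. w \<notin> C \<and> (c, w) \<in> F}" using fF finite_subset by blast
  qed
  have odC: "\<And>c n x1 x2. c \<in> C \<Longrightarrow> n \<in> C \<Longrightarrow> (c, n) \<in> D \<Longrightarrow> (\<forall>w. (c, w) \<in> D \<and> w \<in> C \<longrightarrow> w = n) \<Longrightarrow>
      nbrs E c \<inter> C = {x1, x2} \<Longrightarrow> x1 \<noteq> x2 \<Longrightarrow> outdeg D c = deg E c - 1"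
  proof -
    fix c n x1 x2 assume cC: "c \<in> C" and nC: "n \<in> C" and cn: "(c, n) \<in> D"
      and h: "\<forall>w. (c, w) \<in> D \<and> w \<in> C \<longrightarrow> w = n" and nb: "nbrs E c \<inter> C = {x1, x2}" and x12: "x1 \<noteq> x2"
    have o1: "outdeg D c = 1 + card {w. w \<notin> C \<and> (c, w) \<in> D}"
      using outdegF[OF subset_refl nC h] cn by simp
    have st: "{w. w \<notin> C \<and> (c, w) \<in> D} = nbrs E c - C"
    proof
      show "{w. w \<notin> C \<and> (c, w) \<in> D} \<subseteq> nbrs E c - C"
      proof
        fix w assume w: "w \<in> {w. w \<notin> C \<and> (c, w) \<in> D}"
        then have "(c, w) \<in> D' \<or> (c, w) \<in> Cy \<or> (c, w) \<in> Out" by (simp add: D_def)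
        moreover have "(c, w) \<notin> D'" using arc' cC by blast
        moreover have "(c, w) \<notin> Cy" using w inC by (auto simp: Cy_def Cdef)
        ultimately have "(c, w) \<in> Out" by blast
        then show "w \<in> nbrs E c - C" using w by (auto simp: Out_def nbrs_def insert_commute)
      qed
    next
      show "nbrs E c - C \<subseteq> {w. w \<notin> C \<and> (c, w) \<in> D}"
        using cC by (auto simp: nbrs_def Out_def D_def insert_commute)
    qed
    have fn: "finite (nbrs E c)" using nbrs_finite[OF sg] .
    have "card (nbrs E c - C) = card (nbrs E c) - card (nbrs E c \<inter> C)"
      using card_Diff_subset_Int fn by (metis finite_Int)
    moreover have "card (nbrs E c \<inter> C) = 2" using nb x12 by simp
    moreover have "2 \<le> card (nbrs E c)"
    proof -
      have "nbrs E c \<inter> C \<subseteq> nbrs E c" by blast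
      then show ?thesis using card_mono[OF fn] \<open>card (nbrs E c \<inter> C) = 2\<close> by metis
    qed
    ultimately show "outdeg D c = deg E c - 1" using o1 st by (simp add: deg_def)
  qed
  have nba: "nbrs E a \<inter> C = {p, q}" using es nab nbrs_noloop[OF sg, of a] dd
    by (auto simp: Cdef nbrs_def insert_commute)
  have nbp: "nbrs E p \<inter> C = {a, b}" using es npq nbrs_noloop[OF sg, of p] dd
    by (auto simp: Cdef nbrs_def insert_commute)
  have nbb: "nbrs E b \<inter> C = {p, q}" using es nab nbrs_noloop[OF sg, of b] dd
    by (auto simp: Cdef nbrs_def insert_commute)
  have nbq: "nbrs E q \<inter> C = {a, b}" using es npq nbrs_noloop[OF sg, of q] dd
    by (auto simp: Cdef nbrs_def insert_commute)
  have cyD: "(a, p) \<in> D" "(p, b) \<in> D" "(b, q) \<in> D" "(q, a) \<in> D" by (auto simp: D_def Cy_def)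
  have oda: "outdeg D a = deg E a - 1" by (rule odC[OF inC(1) inC(2) cyD(1) outa nba]) (use dd in simp)
  have odp: "outdeg D p = deg E p - 1" by (rule odC[OF inC(2) inC(3) cyD(2) outp nbp]) (use dd in simp)
  have odb: "outdeg D b = deg E b - 1" by (rule odC[OF inC(3) inC(4) cyD(3) outb nbb]) (use dd in simp)
  have odq: "outdeg D q = deg E q - 1" by (rule odC[OF inC(4) inC(1) cyD(4) outq nbq]) (use dd in simp)
  have odall: "\<forall>u\<in>V. outdeg D u \<le> f u - 1"
  proof
    fix u assume uV: "u \<in> V"
    show "outdeg D u \<le> f u - 1"
    proof (cases "u \<in> C")
      case True
      then have "u = a \<or> u = p \<or> u = b \<or> u = q" by (simp add: Cdef)
      then show ?thesis using oda odp odb odq dg by auto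
    next
      case False
      then have "{w. (u, w) \<in> D} = {w. (u, w) \<in> D'}" by (auto simp: D_def Cy_def Out_def Cdef)
      then show ?thesis using od' uV False by (simp add: outdeg_def)
    qed
  qed
  define Y where "Y = eulerian_subdigraphs (V - C) D'"
  have cyC: "\<And>x y. (x, y) \<in> Cy \<Longrightarrow> x \<in> C \<and> y \<in> C" using inC by (auto simp: Cy_def)
  have eul: "eulerian_subdigraphs V D = Y \<union> (\<lambda>F. F \<union> Cy) ` Y"
  proof
    show "eulerian_subdigraphs V D \<subseteq> Y \<union> (\<lambda>F. F \<union> Cy) ` Y"
    proof
      fix F assume "F \<in> eulerian_subdigraphs V D"
      then have FD: "F \<subseteq> D" and Fe: "\<forall>u\<in>V. outdeg F u = indeg F u"
        by (auto simp: eulerian_subdigraphs_def)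
      define oa where "oa = card {w. w \<notin> C \<and> (a, w) \<in> F}"
      define op where "op = card {w. w \<notin> C \<and> (p, w) \<in> F}"
      define ob where "ob = card {w. w \<notin> C \<and> (b, w) \<in> F}"
      define oq where "oq = card {w. w \<notin> C \<and> (q, w) \<in> F}"
      have ea: "(if (a, p) \<in> F then 1 else 0) + oa = (if (q, a) \<in> F then (1::nat) else 0)"
        using Fe vs outdegF[OF FD inC(2) outa] indegF[OF FD ina] by (simp add: oa_def)
      have ep: "(if (p, b) \<in> F then 1 else 0) + op = (if (a, p) \<in> F then (1::nat) else 0)"
        using Fe vs outdegF[OF FD inC(3) outp] indegF[OF FD inp] by (simp add: op_def)
      have eb: "(if (b, q) \<in> F then 1 else 0) + ob = (if (p, b) \<in> F then (1::nat) else 0)"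
        using Fe vs outdegF[OF FD inC(4) outb] indegF[OF FD inb] by (simp add: ob_def)
      have eq: "(if (q, a) \<in> F then 1 else 0) + oq = (if (b, q) \<in> F then (1::nat) else 0)"
        using Fe vs outdegF[OF FD inC(1) outq] indegF[OF FD inq] by (simp add: oq_def)
      have four: "\<And>i1 i2 i3 i4 o1 o2 o3 o4 :: nat. i1 + o1 = i4 \<Longrightarrow> i2 + o2 = i1 \<Longrightarrow> i3 + o3 = i2 \<Longrightarrow>
          i4 + o4 = i3 \<Longrightarrow> o1 = 0 \<and> o2 = 0 \<and> o3 = 0 \<and> o4 = 0 \<and> i1 = i2 \<and> i2 = i3 \<and> i3 = i4"
        by arith
      note fr = four[OF ea ep eb eq]
      have z: "oa = 0" "op = 0" "ob = 0" "oq = 0" using fr by auto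
      have ind: "\<And>P Q. (if P then 1 else 0) = (if Q then 1 else (0::nat)) \<Longrightarrow> P = Q"
        by (auto split: if_splits)
      have same: "((a, p) \<in> F \<longleftrightarrow> (p, b) \<in> F) \<and> ((p, b) \<in> F \<longleftrightarrow> (b, q) \<in> F) \<and> ((b, q) \<in> F \<longleftrightarrow> (q, a) \<in> F)"
        using fr ind by metis
      have emp: "\<And>c. c \<in> C \<Longrightarrow> {w. w \<notin> C \<and> (c, w) \<in> F} = {}"
      proof -
        fix c assume "c \<in> C"
        then have "c = a \<or> c = p \<or> c = b \<or> c = q" by (simp add: Cdef)
        then have "card {w. w \<notin> C \<and> (c, w) \<in> F} = 0" using z by (auto simp: oa_def op_def ob_def oq_def)
        then show "{w. w \<notin> C \<and> (c, w) \<in> F} = {}" using fin_o[OF FD] by simp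
      qed
      have noOut: "F \<inter> Out = {}"
      proof (rule ccontr)
        assume "F \<inter> Out \<noteq> {}"
        then obtain c u where "(c, u) \<in> F" "c \<in> C" "u \<notin> C" by (auto simp: Out_def)
        then show False using emp by blast
      qed
      define F' where "F' = F - Cy"
      have F'D: "F' \<subseteq> D'" using FD noOut by (auto simp: F'_def D_def)
      have F'e: "\<forall>u\<in>V - C. outdeg F' u = indeg F' u"
      proof
        fix u assume u: "u \<in> V - C"
        have "{w. (u, w) \<in> F'} = {w. (u, w) \<in> F}" using u cyC by (auto simp: F'_def)
        moreover have "{w. (w, u) \<in> F'} = {w. (w, u) \<in> F}" using u cyC by (auto simp: F'_def)
        ultimately show "outdeg F' u = indeg F' u" using Fe u by (simp add: outdeg_def indeg_def)
      qed
      have F'Y: "F' \<in> Y" using F'D F'e by (simp add: Y_def eulerian_subdigraphs_def)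
      show "F \<in> Y \<union> (\<lambda>F. F \<union> Cy) ` Y"
      proof (cases "(a, p) \<in> F")
        case True
        then have "Cy \<subseteq> F" using same by (simp add: Cy_def)
        then have "F = F' \<union> Cy" by (auto simp: F'_def)
        then show ?thesis using F'Y by blast
      next
        case False
        then have "Cy \<inter> F = {}" using same by (auto simp: Cy_def)
        then have "F = F'" by (auto simp: F'_def)
        then show ?thesis using F'Y by blast
      qed
    qed
  next
    show "Y \<union> (\<lambda>F. F \<union> Cy) ` Y \<subseteq> eulerian_subdigraphs V D"
    proof
      fix G assume "G \<in> Y \<union> (\<lambda>F. F \<union> Cy) ` Y"
      then obtain F where FY: "F \<in> Y" and G: "G = F \<or> G = F \<union> Cy" by blast
      have FD: "F \<subseteq> D'" and Fe: "\<forall>u\<in>V - C. outdeg F u = indeg F u"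
        using FY by (auto simp: Y_def eulerian_subdigraphs_def)
      have GD: "G \<subseteq> D" using G FD by (auto simp: D_def)
      have Ge: "\<forall>u\<in>V. outdeg G u = indeg G u"
      proof
        fix u assume uV: "u \<in> V"
        show "outdeg G u = indeg G u"
        proof (cases "u \<in> C")
          case False
          have "{w. (u, w) \<in> G} = {w. (u, w) \<in> F}" using G False cyC by auto
          moreover have "{w. (w, u) \<in> G} = {w. (w, u) \<in> F}" using G False cyC by auto
          ultimately show ?thesis using Fe uV False by (simp add: outdeg_def indeg_def)
        next
          case True
          have F0: "{w. (u, w) \<in> F} = {}" "{w. (w, u) \<in> F} = {}" using FD arc' True by blast+
          show ?thesis
          proof (cases "G = F")
            case True
            then show ?thesis using F0 by (simp add: outdeg_def indeg_def)
          next
            case False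
            then have GF: "G = F \<union> Cy" using G by blast
            have o: "{w. (u, w) \<in> G} = {w. (u, w) \<in> Cy}" "{w. (w, u) \<in> G} = {w. (w, u) \<in> Cy}"
              using F0 GF by auto
            have "u = a \<or> u = p \<or> u = b \<or> u = q" using True by (simp add: Cdef)
            then have "card {w. (u, w) \<in> Cy} = 1 \<and> card {w. (w, u) \<in> Cy} = 1"
            proof (elim disjE)
              assume "u = a"
              then have "{w. (u, w) \<in> Cy} = {p}" "{w. (w, u) \<in> Cy} = {q}" using dd by (auto simp: Cy_def)
              then show ?thesis by simp
            next
              assume "u = p"
              then have "{w. (u, w) \<in> Cy} = {b}" "{w. (w, u) \<in> Cy} = {a}" using dd by (auto simp: Cy_def)
              then show ?thesis by simp
            next
              assume "u = b"
              then have "{w. (u, w) \<in> Cy} = {q}" "{w. (w, u) \<in> Cy} = {p}" using dd by (auto simp: Cy_def)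
              then show ?thesis by simp
            next
              assume "u = q"
              then have "{w. (u, w) \<in> Cy} = {a}" "{w. (w, u) \<in> Cy} = {b}" using dd by (auto simp: Cy_def)
              then show ?thesis by simp
            qed
            then show ?thesis using o by (simp add: outdeg_def indeg_def)
          qed
        qed
      qed
      show "G \<in> eulerian_subdigraphs V D" using GD Ge by (simp add: eulerian_subdigraphs_def)
    qed
  qed
  have YD: "\<forall>F\<in>Y. F \<subseteq> D'" by (auto simp: Y_def eulerian_subdigraphs_def)
  have disC: "Cy \<inter> D' = {}"
  proof (rule ccontr)
    assume "Cy \<inter> D' \<noteq> {}"
    then obtain x y where "(x, y) \<in> Cy" "(x, y) \<in> D'" by auto
    then show False using arc' cyC by blast
  qed
  have cC4: "card Cy = 4" using dd by (simp add: Cy_def)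
  note dbl = diff_double[OF fD' disC _ cC4 _ eul YD]
  have "diff V D = 2 * diff (V - C) D'"
    using dbl by (simp add: diff_def Y_def Cy_def)
  then have "diff V D \<noteq> 0" using df by simp
  then show ?thesis unfolding f_AT_def AT_orientation_def using orD odall by blast
qed



lemma fam_sub:
  assumes "finite V" "card {v\<in>V. f v < (k::nat)} \<le> m" "V' \<subseteq> V"
  shows "card {v\<in>V'. f v < k} \<le> m"
proof -
  have "{v\<in>V'. f v < k} \<subseteq> {v\<in>V. f v < k}" using assms(3) by blast
  then have "card {v\<in>V'. f v < k} \<le> card {v\<in>V. f v < k}" using assms(1) by (intro card_mono) auto
  then show ?thesis using assms(2) by simp
qed

lemma empty_AT:
  assumes "simple_graph {} E" shows "f_AT {} E f"
proof -
  have E0: "E = {}" using assms unfolding simple_graph_def by blast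
  have or0: "orientation E {}" using E0 by (simp add: orientation_def)
  have "eulerian_subdigraphs {} ({} :: ('a \<times> 'a) set) = {{}}" by (auto simp: eulerian_subdigraphs_def)
  moreover have "{F \<in> {{}}. even (card (F :: ('a \<times> 'a) set))} = {{}}" by auto
  moreover have "{F \<in> {{}}. odd (card (F :: ('a \<times> 'a) set))} = {}" by auto
  ultimately have "diff {} ({} :: ('a \<times> 'a) set) = 1" unfolding diff_def by simp
  then show ?thesis using or0 unfolding f_AT_def AT_orientation_def by fastforce
qed

lemma main_gen:
  assumes sg: "simple_graph V E" and tf: "triangle_free E" and nk: "\<not> has_K4_minor V E"
    and f1: "\<forall>v\<in>V. 1 \<le> f v" and f2: "card {v\<in>V. f v < 2} \<le> 1" and f3: "card {v\<in>V. f v < 3} \<le> 3"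
  shows "f_AT V E f"
  using assms
proof (induction "card V" arbitrary: V E rule: less_induct)
  case less
  note sg = less.prems(1) and tf = less.prems(2) and nk = less.prems(3) and f1 = less.prems(4)
    and f2 = less.prems(5) and f3 = less.prems(6)
  have fV: "finite V" using sg_finite[OF sg] .
  show ?case
  proof (cases "V = {}")
    case True
    then show ?thesis using empty_AT sg by blast
  next
    case ne: False
    show ?thesis
    proof (cases "\<exists>v\<in>V. deg E v < f v")
      case True
      then obtain v where vV: "v \<in> V" and dv: "deg E v < f v" by blast
      define V' where "V' = V - {v}"
      define E' where "E' = {e\<in>E. e \<inter> {v} = {}}"
      have sg': "simple_graph V' E'" unfolding V'_def E'_def by (rule del_sg[OF sg])
      have tf': "triangle_free E'" unfolding E'_def by (rule del_tf[OF tf])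
      have nk': "\<not> has_K4_minor V' E'" unfolding V'_def E'_def by (rule del_nk[OF nk])
      have lt: "card V' < card V" unfolding V'_def using card_Diff1_less[OF fV vV] .
      have sub: "V' \<subseteq> V" by (auto simp: V'_def)
      have "f_AT V' E' f"
        using less.hyps[OF lt sg' tf' nk'] f1 sub fam_sub[OF fV f2 sub] fam_sub[OF fV f3 sub] by blast
      then obtain D' where AD: "AT_orientation V' E' D'" and od: "\<forall>u\<in>V'. outdeg D' u \<le> f u - 1"
        unfolding f_AT_def by blast
      have or': "orientation {e\<in>E. e \<inter> {v} = {}} D'" using AD by (simp add: AT_orientation_def E'_def)
      have df: "diff (V - {v}) D' \<noteq> 0" using AD by (simp add: AT_orientation_def V'_def)
      have dv': "deg E v \<le> f v - 1" using dv by simp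
      have od'': "\<forall>u\<in>V - {v}. outdeg D' u \<le> f u - 1" using od by (simp add: V'_def)
      show ?thesis using source_step[OF sg vV or' df od'' dv'] .
    next
      case False
      then have fd: "\<forall>v\<in>V. f v \<le> deg E v" by (auto simp: not_less)
      obtain a p b q where g: "good4 V E f a p b q" using core[OF sg tf nk f1 f2 f3 fd ne] by blast
      define C where "C = {a, p, b, q}"
      define V' where "V' = V - C"
      define E' where "E' = {e\<in>E. e \<inter> C = {}}"
      have aV: "a \<in> V" using g by (simp add: good4_def)
      have sg': "simple_graph V' E'" unfolding V'_def E'_def by (rule del_sg[OF sg])
      have tf': "triangle_free E'" unfolding E'_def by (rule del_tf[OF tf])
      have nk': "\<not> has_K4_minor V' E'" unfolding V'_def E'_def by (rule del_nk[OF nk])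
      have lt: "card V' < card V" unfolding V'_def C_def
        by (rule psubset_card_mono) (use fV aV in auto)
      have sub: "V' \<subseteq> V" by (auto simp: V'_def)
      have "f_AT V' E' f"
        using less.hyps[OF lt sg' tf' nk'] f1 sub fam_sub[OF fV f2 sub] fam_sub[OF fV f3 sub] by blast
      then obtain D' where AD: "AT_orientation V' E' D'" and od: "\<forall>u\<in>V'. outdeg D' u \<le> f u - 1"
        unfolding f_AT_def by blast
      have or': "orientation {e\<in>E. e \<inter> C = {}} D'" using AD by (simp add: AT_orientation_def E'_def)
      have df: "diff (V - C) D' \<noteq> 0" using AD by (simp add: AT_orientation_def V'_def)
      have od': "\<forall>u\<in>V - C. outdeg D' u \<le> f u - 1" using od by (simp add: V'_def)
      show ?thesis
        using g cycle_step[OF sg tf _ _ _ _ _ _ _ _ _ C_def or' df od'] unfolding good4_def by blast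
    qed
  qed
qed

theorem mainTheorem5:
  fixes V :: "'a set" and E :: "'a set set"
  assumes "simple_graph V E"
    and "triangle_free E"
    and "\<not> has_K4_minor V E"
  shows "\<forall>x\<in>V. \<forall>y\<in>V. \<forall>z\<in>V. distinct [x, y, z] \<longrightarrow>
           AT_extendable V E [2, 2, 1] [x, y, z]"
proof (intro ballI impI)
  fix x y z assume xyz: "x \<in> V" "y \<in> V" "z \<in> V" "distinct [x, y, z]"
  define g where "g = (\<lambda>v. case map_of (zip [x, y, z] [2, 2, 1]) v of None \<Rightarrow> 3 | Some a \<Rightarrow> (a::nat))"
  have gv: "\<And>v. g v = (if v = x then 2 else if v = y then 2 else if v = z then 1 else 3)"
    using xyz(4) by (auto simp: g_def)
  have fV: "finite V" using sg_finite[OF assms(1)] .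
  have g1: "\<forall>v\<in>V. 1 \<le> g v" by (simp add: gv)
  have g2: "card {v\<in>V. g v < 2} \<le> 1"
  proof -
    have "{v\<in>V. g v < 2} \<subseteq> {z}" by (auto simp: gv split: if_splits)
    then have "card {v\<in>V. g v < 2} \<le> card {z}" by (intro card_mono) auto
    then show ?thesis by simp
  qed
  have g3: "card {v\<in>V. g v < 3} \<le> 3"
  proof -
    have "{v\<in>V. g v < 3} \<subseteq> {x, y, z}" by (auto simp: gv split: if_splits)
    then have "card {v\<in>V. g v < 3} \<le> card {x, y, z}" by (intro card_mono) auto
    also have "\<dots> \<le> 3" by (simp add: card_insert_if)
    finally show ?thesis .
  qed
  have "f_AT V E g" using main_gen[OF assms g1 g2 g3] .
  then show "AT_extendable V E [2, 2, 1] [x, y, z]" by (simp add: AT_extendable_def g_def)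
qed


end
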